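(* Let $L>0$ and let $\phi$ satisfy (H_φ), (H_int), (H_bdd). Define $\psi(s)=\int_0^s\phi(t)\,dt$ for $s\in\mathbb{R}$. If $z\in H^1(0,L)$ and $\phi(z)\in L^2(0,L)$, then $\psi(z)\in W^{1,1}(0,L)$ with $\frac{d\psi(z)}{dx}=\phi(z)\frac{dz}{dx}$ in $\mathcal D'(0,L)$; in particular $\int_0^L\phi(z)\frac{dz}{dx}\,dx=\psi(z(L))-\psi(z(0))$.
   Context: (H_φ): $\phi:\mathbb{R}\to\mathbb{R}\cup\{+\infty\}$ is continuous when $\mathbb{R}\cup\{+\infty\}$ carries its usual topology, and $\phi(s)<+\infty$ for every $s\neq0$. (H_int): $\int_0^\delta\phi(t)\,dt<+\infty$ and $\int_{-\delta}^0\phi(t)\,dt<+\infty$ for every $\delta\in(0,1)$. (H_bdd): for every $\delta>0$, $\phi$ is bounded (and continuous) on $\mathbb{R}\setminus(-\delta,\delta)$. Functions in $H^1(0,L)$ are identified with their continuous representatives. *)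

theory Defs
  imports "HOL-Analysis.Analysis"
begin

definition smooth_fun :: "(real \<Rightarrow> real) \<Rightarrow> bool" where
  "smooth_fun f \<longleftrightarrow> (\<forall>k x. ((deriv ^^ k) f) differentiable (at x))"

definition test_fun :: "real \<Rightarrow> real \<Rightarrow> (real \<Rightarrow> real) \<Rightarrow> bool" where
  "test_fun a b \<phi> \<longleftrightarrow> smooth_fun \<phi> \<and>
     (\<exists>c d. a < c \<and> c \<le> d \<and> d < b \<and> (\<forall>x. x \<notin> {c..d} \<longrightarrow> \<phi> x = 0))"

definition L1_on :: "real set \<Rightarrow> (real \<Rightarrow> real) \<Rightarrow> bool" where
  "L1_on S f \<longleftrightarrow> set_integrable lborel S f"

definition L2_on :: "real set \<Rightarrow> (real \<Rightarrow> real) \<Rightarrow> bool" where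
  "L2_on S f \<longleftrightarrow> set_borel_measurable lborel S f \<and> set_integrable lborel S (\<lambda>x. (f x)\<^sup>2)"

definition weak_deriv_on :: "real \<Rightarrow> real \<Rightarrow> (real \<Rightarrow> real) \<Rightarrow> (real \<Rightarrow> real) \<Rightarrow> bool" where
  "weak_deriv_on a b f g \<longleftrightarrow>
     (\<forall>c d. a < c \<and> d < b \<longrightarrow> set_integrable lborel {c..d} f \<and> set_integrable lborel {c..d} g) \<and>
     (\<forall>\<phi>. test_fun a b \<phi> \<longrightarrow>
        (LINT x:{a<..<b}|lborel. f x * deriv \<phi> x) = - (LINT x:{a<..<b}|lborel. g x * \<phi> x))"

definition W11_on :: "real \<Rightarrow> real \<Rightarrow> (real \<Rightarrow> real) \<Rightarrow> bool" where
  "W11_on a b f \<longleftrightarrow> L1_on {a<..<b} f \<and> (\<exists>g. L1_on {a<..<b} g \<and> weak_deriv_on a b f g)"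

definition H_phi :: "(real \<Rightarrow> ereal) \<Rightarrow> bool" where
  "H_phi \<phi> \<longleftrightarrow> continuous_on UNIV \<phi> \<and> (\<forall>s. \<phi> s \<noteq> -\<infinity>) \<and> (\<forall>s. s \<noteq> 0 \<longrightarrow> \<phi> s < \<infinity>)"

definition H_int :: "(real \<Rightarrow> ereal) \<Rightarrow> bool" where
  "H_int \<phi> \<longleftrightarrow> (\<forall>\<delta>. 0 < \<delta> \<and> \<delta> < 1 \<longrightarrow>
     set_integrable lborel {0<..<\<delta>} (\<lambda>t. real_of_ereal (\<phi> t)) \<and>
     set_integrable lborel {-\<delta><..<0} (\<lambda>t. real_of_ereal (\<phi> t)))"

definition H_bdd :: "(real \<Rightarrow> ereal) \<Rightarrow> bool" where
  "H_bdd \<phi> \<longleftrightarrow> (\<forall>\<delta>>0. \<exists>M. \<forall>s. \<bar>s\<bar> \<ge> \<delta> \<longrightarrow> \<bar>\<phi> s\<bar> \<le> ereal M)"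

definition psi :: "(real \<Rightarrow> ereal) \<Rightarrow> real \<Rightarrow> real" where
  "psi \<phi> s = interval_lebesgue_integral lborel (ereal 0) (ereal s) (\<lambda>t. real_of_ereal (\<phi> t))"

end

theory Submission
  imports Defs
begin

definition smooth_upto :: "nat \<Rightarrow> (real \<Rightarrow> real) \<Rightarrow> bool" where
  "smooth_upto k f \<longleftrightarrow> (\<forall>j\<le>k. \<forall>x. ((deriv ^^ j) f) differentiable (at x))"

lemma smooth_fun_upto: "smooth_fun f \<longleftrightarrow> (\<forall>k. smooth_upto k f)"
  unfolding smooth_fun_def smooth_upto_def by blast

lemma smooth_upto_0: "smooth_upto 0 f \<longleftrightarrow> (\<forall>x. f differentiable (at x))"
  unfolding smooth_upto_def by simp

lemma smooth_upto_Suc: "smooth_upto (Suc k) f \<longleftrightarrow> (\<forall>x. f differentiable (at x)) \<and> smooth_upto k (deriv f)"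
proof -
  have "(\<forall>j\<le>Suc k. P j) \<longleftrightarrow> P 0 \<and> (\<forall>j\<le>k. P (Suc j))" for P
    by (metis Suc_le_mono le0 not0_implies_Suc)
  thus ?thesis unfolding smooth_upto_def by (simp add: funpow_Suc_right del: funpow.simps)
qed

lemma smooth_upto_mono: "smooth_upto k f \<Longrightarrow> j \<le> k \<Longrightarrow> smooth_upto j f"
  unfolding smooth_upto_def by auto

lemma rdiff_fdiff: "(f::real\<Rightarrow>real) differentiable (at x) \<Longrightarrow> f field_differentiable (at x)"
  by (metis DERIV_deriv_iff_real_differentiable DERIV_deriv_iff_field_differentiable)

lemma deriv_add_fun:
  fixes f g :: "real \<Rightarrow> real"
  assumes "\<forall>x. f differentiable (at x)" "\<forall>x. g differentiable (at x)"
  shows "deriv (\<lambda>x. f x + g x) = (\<lambda>x. deriv f x + deriv g x)"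
  using assms by (intro ext deriv_add) (auto intro: rdiff_fdiff)

lemma deriv_mult_fun:
  fixes f g :: "real \<Rightarrow> real"
  assumes "\<forall>x. f differentiable (at x)" "\<forall>x. g differentiable (at x)"
  shows "deriv (\<lambda>x. f x * g x) = (\<lambda>x. deriv f x * g x + f x * deriv g x)"
  using assms by (intro ext) (simp add: deriv_mult rdiff_fdiff)

lemma deriv_cmult_fun:
  fixes f :: "real \<Rightarrow> real"
  assumes "\<forall>x. f differentiable (at x)"
  shows "deriv (\<lambda>x. c * f x) = (\<lambda>x. c * deriv f x)"
  using assms by (intro ext deriv_cmult) (auto intro: rdiff_fdiff)

lemma deriv_affine_fun:
  fixes f :: "real \<Rightarrow> real"
  assumes "\<forall>x. f differentiable (at x)"
  shows "deriv (\<lambda>x. f (a * x + b)) = (\<lambda>x. a * deriv f (a * x + b))"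
proof
  fix x
  have "(f has_real_derivative deriv f (a*x+b)) (at (a*x+b))"
    using assms DERIV_deriv_iff_real_differentiable by blast
  hence "((\<lambda>x. f (a * x + b)) has_real_derivative deriv f (a*x+b) * a) (at x)"
    by (rule DERIV_chain2) (auto intro!: derivative_eq_intros)
  thus "deriv (\<lambda>x. f (a * x + b)) x = a * deriv f (a * x + b)"
    by (simp add: DERIV_imp_deriv mult.commute)
qed

lemma diff_affine:
  fixes f :: "real \<Rightarrow> real"
  assumes "\<forall>x. f differentiable (at x)"
  shows "(\<lambda>x. f (a * x + b)) differentiable (at x)"
proof -
  have "(f has_real_derivative deriv f (a*x+b)) (at (a*x+b))"
    using assms DERIV_deriv_iff_real_differentiable by blast
  hence "((\<lambda>x. f (a * x + b)) has_real_derivative deriv f (a*x+b) * a) (at x)"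
    by (rule DERIV_chain2) (auto intro!: derivative_eq_intros)
  thus ?thesis using real_differentiable_def by blast
qed

lemma smooth_upto_add: "smooth_upto k f \<Longrightarrow> smooth_upto k g \<Longrightarrow> smooth_upto k (\<lambda>x. f x + g x)"
proof (induction k arbitrary: f g)
  case 0 thus ?case by (auto simp: smooth_upto_0)
next
  case (Suc k)
  thus ?case by (auto simp: smooth_upto_Suc deriv_add_fun)
qed

lemma smooth_upto_cmult: "smooth_upto k f \<Longrightarrow> smooth_upto k (\<lambda>x. c * f x)"
proof (induction k arbitrary: f)
  case 0 thus ?case by (auto simp: smooth_upto_0)
next
  case (Suc k)
  thus ?case by (auto simp: smooth_upto_Suc deriv_cmult_fun)
qed

lemma smooth_upto_mult: "smooth_upto k f \<Longrightarrow> smooth_upto k g \<Longrightarrow> smooth_upto k (\<lambda>x. f x * g x)"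
proof (induction k arbitrary: f g)
  case 0 thus ?case by (auto simp: smooth_upto_0)
next
  case (Suc k)
  have f: "\<forall>x. f differentiable (at x)" "smooth_upto k (deriv f)" "smooth_upto k f"
    using Suc.prems(1) smooth_upto_mono[OF Suc.prems(1)] by (auto simp: smooth_upto_Suc)
  have g: "\<forall>x. g differentiable (at x)" "smooth_upto k (deriv g)" "smooth_upto k g"
    using Suc.prems(2) smooth_upto_mono[OF Suc.prems(2)] by (auto simp: smooth_upto_Suc)
  show ?case using f g
    by (auto simp: smooth_upto_Suc deriv_mult_fun intro!: smooth_upto_add Suc.IH)
qed

lemma smooth_upto_affine: "smooth_upto k f \<Longrightarrow> smooth_upto k (\<lambda>x. f (a * x + b))"
proof (induction k arbitrary: f)
  case 0 
  thus ?case by (auto simp: smooth_upto_0 intro!: diff_affine)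
next
  case (Suc k)
  hence "\<forall>x. f differentiable (at x)" by (auto simp: smooth_upto_Suc)
  thus ?case using Suc
    by (auto simp: smooth_upto_Suc deriv_affine_fun intro!: smooth_upto_cmult diff_affine)
qed

lemma smooth_fun_add: "smooth_fun f \<Longrightarrow> smooth_fun g \<Longrightarrow> smooth_fun (\<lambda>x. f x + g x)"
  and smooth_fun_mult: "smooth_fun f \<Longrightarrow> smooth_fun g \<Longrightarrow> smooth_fun (\<lambda>x. f x * g x)"
  and smooth_fun_cmult: "smooth_fun f \<Longrightarrow> smooth_fun (\<lambda>x. c * f x)"
  and smooth_fun_affine: "smooth_fun f \<Longrightarrow> smooth_fun (\<lambda>x. f (a * x + b))"
  by (auto simp: smooth_fun_upto smooth_upto_add smooth_upto_mult smooth_upto_cmult smooth_upto_affine)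

inductive ispoly :: "(real \<Rightarrow> real) \<Rightarrow> bool" where
  ispoly_const: "ispoly (\<lambda>u. c)"
| ispoly_id: "ispoly (\<lambda>u. u)"
| ispoly_add: "ispoly p \<Longrightarrow> ispoly q \<Longrightarrow> ispoly (\<lambda>u. p u + q u)"
| ispoly_mult: "ispoly p \<Longrightarrow> ispoly q \<Longrightarrow> ispoly (\<lambda>u. p u * q u)"

lemma ispoly_neg: "ispoly p \<Longrightarrow> ispoly (\<lambda>u. - p u)"
  using ispoly_mult[OF ispoly_const[of "-1"], of p] by simp

lemma ispoly_deriv: "ispoly p \<Longrightarrow> \<exists>p'. ispoly p' \<and> (\<forall>u. (p has_real_derivative p' u) (at u))"
proof (induction rule: ispoly.induct)
  case (ispoly_const c)
  show ?case by (rule exI[of _ "\<lambda>u. 0"]) (auto intro: ispoly.intros)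
next
  case ispoly_id
  show ?case by (rule exI[of _ "\<lambda>u. 1"]) (auto intro: ispoly.intros)
next
  case (ispoly_add p q)
  then obtain p' q' where "ispoly p'" "\<forall>u. (p has_real_derivative p' u) (at u)"
     "ispoly q'" "\<forall>u. (q has_real_derivative q' u) (at u)" by blast
  thus ?case by (intro exI[of _ "\<lambda>u. p' u + q' u"]) (auto intro: ispoly.intros derivative_intros)
next
  case (ispoly_mult p q)
  then obtain p' q' where *: "ispoly p'" "\<forall>u. (p has_real_derivative p' u) (at u)"
     "ispoly q'" "\<forall>u. (q has_real_derivative q' u) (at u)" by blast
  show ?case 
    by (intro exI[of _ "\<lambda>u. p' u * q u + p u * q' u"]) 
       (use * ispoly_mult.hyps in \<open>auto intro!: ispoly.intros derivative_eq_intros\<close>)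
qed

lemma ispoly_bound: "ispoly p \<Longrightarrow> \<exists>C n. \<forall>u\<ge>1. \<bar>p u\<bar> \<le> C * u ^ n"
proof (induction rule: ispoly.induct)
  case (ispoly_const c)
  show ?case by (rule exI[of _ "\<bar>c\<bar>"], rule exI[of _ 0]) auto
next
  case ispoly_id
  show ?case by (rule exI[of _ 1], rule exI[of _ 1]) auto
next
  case (ispoly_add p q)
  then obtain C1 n1 C2 n2 where 1: "\<forall>u\<ge>1. \<bar>p u\<bar> \<le> C1 * u ^ n1" and 2: "\<forall>u\<ge>1. \<bar>q u\<bar> \<le> C2 * u ^ n2"
    by blast
  have "\<bar>p u + q u\<bar> \<le> (\<bar>C1\<bar> + \<bar>C2\<bar>) * u ^ (n1 + n2)" if "u \<ge> 1" for u
  proof -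
    have a: "u ^ n1 \<le> u ^ (n1+n2)" "u ^ n2 \<le> u ^ (n1+n2)" using that by (auto intro: power_increasing)
    have "\<bar>p u + q u\<bar> \<le> C1 * u ^ n1 + C2 * u ^ n2" using 1[rule_format, OF that] 2[rule_format, OF that] abs_triangle_ineq[of "p u" "q u"] by linarith
    also have "\<dots> \<le> \<bar>C1\<bar> * u ^ (n1+n2) + \<bar>C2\<bar> * u ^ (n1+n2)"
      using a that by (intro add_mono mult_mono) auto
    finally show ?thesis by (simp add: algebra_simps)
  qed
  thus ?case by blast
next
  case (ispoly_mult p q)
  then obtain C1 n1 C2 n2 where 1: "\<forall>u\<ge>1. \<bar>p u\<bar> \<le> C1 * u ^ n1" and 2: "\<forall>u\<ge>1. \<bar>q u\<bar> \<le> C2 * u ^ n2"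
    by blast
  have "\<bar>p u * q u\<bar> \<le> (C1 * C2) * u ^ (n1 + n2)" if "u \<ge> 1" for u
  proof -
    have "\<bar>p u * q u\<bar> = \<bar>p u\<bar> * \<bar>q u\<bar>" by (simp add: abs_mult)
    also have "\<dots> \<le> (C1 * u ^ n1) * (C2 * u ^ n2)"
      using 1 2 that by (intro mult_mono) auto
    finally show ?thesis by (simp add: algebra_simps power_add)
  qed
  thus ?case by blast
qed

lemma ispoly_exp_lim: assumes "ispoly p" shows "((\<lambda>u. p u * exp (-u)) \<longlongrightarrow> 0) at_top"
proof -
  obtain C n where C: "\<forall>u\<ge>1. \<bar>p u\<bar> \<le> C * u ^ n" using ispoly_bound[OF assms] by blast
  have "((\<lambda>u. C * (u ^ n / exp u)) \<longlongrightarrow> C * 0) at_top"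
    by (intro tendsto_mult tendsto_const tendsto_power_div_exp_0)
  hence lim: "((\<lambda>u. C * (u ^ n / exp u)) \<longlongrightarrow> 0) at_top" by simp
  show ?thesis
  proof (rule Lim_null_comparison[OF _ lim])
    have "\<forall>\<^sub>F u in at_top. (u::real) \<ge> 1" by (rule eventually_ge_at_top)
    thus "\<forall>\<^sub>F u in at_top. norm (p u * exp (-u)) \<le> C * (u ^ n / exp u)"
    proof eventually_elim
      case (elim u)
      have "norm (p u * exp (-u)) = \<bar>p u\<bar> / exp u" by (simp add: abs_mult exp_minus field_simps)
      also have "\<dots> \<le> C * u ^ n / exp u" using C elim by (intro divide_right_mono) auto
      finally show ?case by simp
    qed
  qed
qed

definition f0 :: "real \<Rightarrow> real" where
  "f0 x = (if x \<le> 0 then 0 else exp (- 1 / x))"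

definition pe :: "(real \<Rightarrow> real) \<Rightarrow> real \<Rightarrow> real" where
  "pe p x = (if x \<le> 0 then 0 else p (1/x) * exp (- 1 / x))"

lemma pe_right_lim: assumes "ispoly p" shows "((\<lambda>h. p (1/h) * exp (-1/h)) \<longlongrightarrow> 0) (at_right 0)"
proof -
  have "((\<lambda>h. p (inverse h) * exp (- inverse h)) \<longlongrightarrow> 0) (at_right (0::real))"
    by (rule filterlim_compose[OF ispoly_exp_lim[OF assms] filterlim_inverse_at_top_right])
  thus ?thesis by (simp add: divide_inverse)
qed

lemma pe_deriv:
  assumes p: "ispoly p"
  obtains q where "ispoly q" "\<And>x. (pe p has_real_derivative pe q x) (at x)"
proof -
  obtain p' where p': "ispoly p'" "\<And>u. (p has_real_derivative p' u) (at u)" using ispoly_deriv[OF p] by blast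
  define q where "q u = u * u * (p u - p' u)" for u
  have q: "ispoly q" unfolding q_def 
    using ispoly_add[OF p ispoly_neg[OF p'(1)]] by (intro ispoly.intros) auto
  have "(pe p has_real_derivative pe q x) (at x)" for x
  proof (cases "x > 0")
    case True
    have d: "((\<lambda>x. p (1/x) * exp (- 1 / x)) has_real_derivative pe q x) (at x)"
    proof -
      have di: "((\<lambda>x. 1 / x) has_real_derivative (- 1 / x^2)) (at x)"
        using True by (auto intro!: derivative_eq_intros simp: power2_eq_square field_simps)
      have dp: "((\<lambda>x. p (1/x)) has_real_derivative p' (1/x) * (- 1 / x^2)) (at x)"
        by (rule DERIV_chain2[OF p'(2) di])
      have de: "((\<lambda>x. exp (- 1 / x)) has_real_derivative exp (- 1 / x) * (1 / x^2)) (at x)"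
        using True by (auto intro!: derivative_eq_intros simp: power2_eq_square field_simps)
      have "((\<lambda>x. p (1/x) * exp (- 1 / x)) has_real_derivative 
           (p' (1/x) * (- 1 / x^2)) * exp (- 1 / x) + (exp (- 1 / x) * (1 / x^2)) * p (1/x)) (at x)"
        by (rule DERIV_mult[OF dp de])
      moreover have "(p' (1/x) * (- 1 / x^2)) * exp (- 1 / x) + (exp (- 1 / x) * (1 / x^2)) * p (1/x) = pe q x"
        using True by (simp add: pe_def q_def power2_eq_square field_simps)
      ultimately show ?thesis by simp
    qed
    show ?thesis
      by (rule has_field_derivative_transform_within_open[OF d, of "{0<..}"]) (use True in \<open>auto simp: pe_def\<close>)
  next
    case False
    show ?thesis
    proof (cases "x < 0")
      case True
      have "((\<lambda>x. 0) has_real_derivative 0) (at x)" by simp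
      hence "((\<lambda>x. 0) has_real_derivative pe q x) (at x)" using True by (simp add: pe_def)
      thus ?thesis
        by (rule has_field_derivative_transform_within_open[of _ _ _ "{..<0}"]) (use True in \<open>auto simp: pe_def\<close>)
    next
      case False
      with \<open>\<not> x > 0\<close> have x0: "x = 0" by auto
      have r: "ispoly (\<lambda>u. u * p u)" by (intro ispoly.intros p)
      have "((\<lambda>h. (pe p h - pe p 0) / h) \<longlongrightarrow> 0) (at 0)"
      proof (rule filterlim_split_at)
        have "\<forall>\<^sub>F h in at_left (0::real). h \<in> {-1<..<0}" by (rule eventually_at_left_real) simp
        hence "\<forall>\<^sub>F h in at_left (0::real). 0 = (pe p h - pe p 0) / h"
          by eventually_elim (auto simp: pe_def)
        thus "((\<lambda>h. (pe p h - pe p 0) / h) \<longlongrightarrow> 0) (at_left 0)"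
          by (rule Lim_transform_eventually[rotated]) simp
      next
        have "\<forall>\<^sub>F h in at_right (0::real). h \<in> {0<..<1}" by (rule eventually_at_right_real) simp
        hence "\<forall>\<^sub>F h in at_right (0::real). (1/h) * p (1/h) * exp (-1/h) = (pe p h - pe p 0) / h"
          by eventually_elim (auto simp: pe_def)
        moreover have "((\<lambda>h. (1/h) * p (1/h) * exp (-1/h)) \<longlongrightarrow> 0) (at_right 0)"
          using pe_right_lim[OF r] by simp
        ultimately show "((\<lambda>h. (pe p h - pe p 0) / h) \<longlongrightarrow> 0) (at_right 0)"
          by (rule Lim_transform_eventually[rotated]) 
      qed
      hence "(pe p has_real_derivative 0) (at 0)"
        by (simp add: has_field_derivative_iff)
      thus ?thesis using x0 by (simp add: pe_def)
    qed
  qed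
  thus ?thesis using that q by blast
qed

lemma f0_pe: "f0 = pe (\<lambda>u. 1)"
  by (auto simp: f0_def pe_def fun_eq_iff)

lemma f0_derivs: "\<exists>p. ispoly p \<and> (deriv ^^ k) f0 = pe p"
proof (induction k)
  case 0 show ?case by (auto simp: f0_pe intro: ispoly.intros)
next
  case (Suc k)
  then obtain p where p: "ispoly p" "(deriv ^^ k) f0 = pe p" by blast
  obtain q where q: "ispoly q" "\<And>x. (pe p has_real_derivative pe q x) (at x)" using pe_deriv[OF p(1)] by blast
  have "(deriv ^^ Suc k) f0 = pe q" using q(2) p(2) by (auto intro!: DERIV_imp_deriv)
  thus ?case using q by blast
qed

lemma f0_smooth: "smooth_fun f0"
  unfolding smooth_fun_def
proof (intro allI)
  fix k x
  obtain p where p: "ispoly p" "(deriv ^^ k) f0 = pe p" using f0_derivs by blast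
  obtain q where q: "\<And>x. (pe p has_real_derivative pe q x) (at x)" using pe_deriv[OF p(1)] by blast
  show "(deriv ^^ k) f0 differentiable at x" unfolding p(2) using q[of x] real_differentiable_def by blast
qed

lemma smooth_contin: "smooth_fun f \<Longrightarrow> continuous_on S f"
  unfolding smooth_fun_def
  by (metis continuous_at_imp_continuous_on differentiable_imp_continuous_within funpow_0)

lemma smooth_diff: "smooth_fun f \<Longrightarrow> f differentiable (at x)"
  unfolding smooth_fun_def by (metis funpow_0)

lemma smooth_deriv: "smooth_fun f \<Longrightarrow> smooth_fun (deriv f)"
  unfolding smooth_fun_upto by (metis smooth_upto_Suc)

definition bb :: "real \<Rightarrow> real" where "bb x = f0 x * f0 (1 - x)"

lemma bb_smooth: "smooth_fun bb"
proof -
  have "smooth_fun (\<lambda>x. f0 ((-1) * x + 1))" by (rule smooth_fun_affine[OF f0_smooth])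
  hence "smooth_fun (\<lambda>x. f0 x * f0 ((-1) * x + 1))" by (rule smooth_fun_mult[OF f0_smooth])
  thus ?thesis unfolding bb_def[abs_def] by simp
qed

lemma bb_nonneg: "bb x \<ge> 0" by (simp add: bb_def f0_def)
lemma bb_zero: "x \<le> 0 \<or> x \<ge> 1 \<Longrightarrow> bb x = 0" by (auto simp: bb_def f0_def)
lemma bb_pos: "0 < x \<Longrightarrow> x < 1 \<Longrightarrow> bb x > 0" by (auto simp: bb_def f0_def)
lemma bb_cont: "continuous_on S bb" by (rule smooth_contin[OF bb_smooth])

definition FF :: "real \<Rightarrow> real" where "FF s = integral {-1..s} bb"

lemma FF_nonpos: "t \<le> 0 \<Longrightarrow> FF t = 0"
proof -
  assume t: "t \<le> 0"
  have "integral {-1..t} bb = integral {-1..t} (\<lambda>_. 0::real)"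
    by (rule integral_cong) (use t in \<open>auto intro: bb_zero\<close>)
  thus ?thesis by (simp add: FF_def)
qed

lemma FF_deriv: "(FF has_real_derivative bb s) (at s)"
proof (cases "s < 0")
  case True
  have "((\<lambda>_. 0) has_real_derivative bb s) (at s)" using True bb_zero by simp
  thus ?thesis
    by (rule has_field_derivative_transform_within_open[of _ _ _ "{..<0}"]) (use True FF_nonpos in auto)
next
  case False
  have "((\<lambda>u. integral {-1..u} bb) has_vector_derivative bb s) (at s within {-1..s+1})"
    using False by (intro integral_has_vector_derivative bb_cont) auto
  moreover have "at s within {-1..s+1} = at s"
    using False by (intro at_within_interior) auto
  ultimately show ?thesis
    by (simp add: FF_def[abs_def] has_real_derivative_iff_has_vector_derivative)
qed

lemma FF_one: "t \<ge> 1 \<Longrightarrow> FF t = FF 1"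
proof -
  assume t: "t \<ge> 1"
  have "integral {-1..1} bb + integral {1..t} bb = integral {-1..t} bb"
    by (rule Henstock_Kurzweil_Integration.integral_combine) (use t in \<open>auto intro: integrable_continuous_interval bb_cont\<close>)
  moreover have "integral {1..t} bb = integral {1..t} (\<lambda>_. 0::real)"
    by (rule integral_cong) (auto intro: bb_zero)
  ultimately show ?thesis by (simp add: FF_def)
qed

lemma FF1_pos: "FF 1 > 0"
proof -
  obtain x where "0 < x" "x < 1" "FF 1 - FF 0 = (1 - 0) * bb x"
    using MVT2[of 0 1 FF bb] FF_deriv by auto
  thus ?thesis using bb_pos FF_nonpos[of 0] by auto
qed

lemma FF_mono: "t \<le> t' \<Longrightarrow> FF t \<le> FF t'"
proof -
  assume "t \<le> t'"
  thus ?thesis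
  proof (rule DERIV_nonneg_imp_nondecreasing)
    fix x show "\<exists>y. DERIV FF x :> y \<and> y \<ge> 0" using FF_deriv[of x] bb_nonneg[of x] by blast
  qed
qed

lemma FF_smooth: "smooth_fun FF"
proof -
  have dF: "deriv FF = bb" using FF_deriv by (intro ext DERIV_imp_deriv)
  have d: "\<forall>x. FF differentiable (at x)" using FF_deriv real_differentiable_def by blast
  have "smooth_upto k FF" for k
  proof (cases k)
    case 0 thus ?thesis using d by (simp add: smooth_upto_0)
  next
    case (Suc j) thus ?thesis using d dF bb_smooth by (simp add: smooth_upto_Suc smooth_fun_upto)
  qed
  thus ?thesis by (simp add: smooth_fun_upto)
qed

definition HH :: "real \<Rightarrow> real" where "HH s = (1 / FF 1) * FF s"

lemma HH_smooth: "smooth_fun HH"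
  unfolding HH_def[abs_def] by (rule smooth_fun_cmult[OF FF_smooth])

lemma HH_deriv: "(HH has_real_derivative bb s / FF 1) (at s)"
  unfolding HH_def[abs_def] using DERIV_cmult[OF FF_deriv, of "1 / FF 1" s] by simp

lemma HH_zero: "s \<le> 0 \<Longrightarrow> HH s = 0" by (simp add: HH_def FF_nonpos)
lemma HH_one: "s \<ge> 1 \<Longrightarrow> HH s = 1" using FF1_pos FF_one[of s] by (simp add: HH_def)
lemma HH_mono: "s \<le> s' \<Longrightarrow> HH s \<le> HH s'"
proof -
  assume "s \<le> s'"
  hence "FF s \<le> FF s'" by (rule FF_mono)
  thus ?thesis unfolding HH_def using FF1_pos by (intro mult_left_mono) auto
qed
lemma HH_bounds: "0 \<le> HH s" "HH s \<le> 1"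
proof -
  show "0 \<le> HH s"
  proof (cases "s \<le> 0")
    case False thus ?thesis using HH_mono[of 0 s] HH_zero[of 0] by simp
  qed (simp add: HH_zero)
  show "HH s \<le> 1"
  proof (cases "s \<ge> 1")
    case False thus ?thesis using HH_mono[of s 1] HH_one[of 1] by simp
  qed (simp add: HH_one)
qed

definition theta :: "real \<Rightarrow> real \<Rightarrow> real \<Rightarrow> real \<Rightarrow> real" where
  "theta a b e t = HH ((t - a) / e) - HH ((t - b) / e)"

definition thetad :: "real \<Rightarrow> real \<Rightarrow> real \<Rightarrow> real \<Rightarrow> real" where
  "thetad a b e t = bb ((t - a) / e) / (e * FF 1) - bb ((t - b) / e) / (e * FF 1)"

lemma theta_smooth: "smooth_fun (theta a b e)"
proof -
  have "smooth_fun (\<lambda>t. HH ((1/e) * t + (-a/e)) + (-1) * HH ((1/e) * t + (-b/e)))"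
    by (intro smooth_fun_add smooth_fun_cmult smooth_fun_affine HH_smooth)
  moreover have "(\<lambda>t. HH ((1/e) * t + (-a/e)) + (-1) * HH ((1/e) * t + (-b/e))) = theta a b e"
    by (cases "e = 0") (auto simp: theta_def fun_eq_iff diff_divide_distrib)
  ultimately show ?thesis by simp
qed

lemma theta_deriv: "e > 0 \<Longrightarrow> (theta a b e has_real_derivative thetad a b e t) (at t)"
proof -
  assume e: "e > 0"
  have "((\<lambda>t. HH ((t - a) / e)) has_real_derivative (bb ((t - a) / e) / FF 1) * (1 / e)) (at t)" for a
    by (rule DERIV_chain2[OF HH_deriv]) (use e in \<open>auto intro!: derivative_eq_intros\<close>)
  from DERIV_diff[OF this[of a] this[of b]] show ?thesis
    unfolding theta_def[abs_def] thetad_def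
    by (rule DERIV_cong) (simp add: mult.commute[of "FF 1"])
qed

lemma deriv_theta: "e > 0 \<Longrightarrow> deriv (theta a b e) = thetad a b e"
  using theta_deriv by (intro ext DERIV_imp_deriv)

lemma theta_supp: "e > 0 \<Longrightarrow> a \<le> b \<Longrightarrow> t \<notin> {a..b+e} \<Longrightarrow> theta a b e t = 0"
proof -
  assume e: "e > 0" and ab: "a \<le> b" and t: "t \<notin> {a..b+e}"
  show ?thesis
  proof (cases "t < a")
    case True
    hence "(t - a) / e \<le> 0" "(t - b) / e \<le> 0" using e ab by (auto simp: divide_nonpos_pos)
    thus ?thesis by (simp add: theta_def HH_zero)
  next
    case False
    hence "t > b + e" using t by auto
    hence "(t - a) / e \<ge> 1" "(t - b) / e \<ge> 1" using e ab by (auto simp: field_simps)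
    thus ?thesis by (simp add: theta_def HH_one)
  qed
qed

lemma theta_test: "e > 0 \<Longrightarrow> 0 < a \<Longrightarrow> a \<le> b \<Longrightarrow> b + e < L \<Longrightarrow> test_fun 0 L (theta a b e)"
proof -
  assume *: "e > 0" "0 < a" "a \<le> b" "b + e < L"
  have "\<forall>x. x \<notin> {a..b+e} \<longrightarrow> theta a b e x = 0" using theta_supp[OF *(1,3)] by blast
  thus ?thesis unfolding test_fun_def using theta_smooth[of a b e] *
    by (intro conjI exI[of _ a] exI[of _ "b+e"]) auto
qed

lemma integral_sub0:
  fixes f :: "real \<Rightarrow> real"
  assumes "f integrable_on {0..L}" "0 \<le> x" "x \<le> y" "y \<le> L"
  shows "integral {x..y} f = integral {0..y} f - integral {0..x} f"
proof -
  have "f integrable_on {0..y}" using assms by (intro integrable_subinterval_real[OF assms(1)]) auto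
  from Henstock_Kurzweil_Integration.integral_combine[OF assms(2,3) this] show ?thesis by simp
qed

lemma theta_range: "e > 0 \<Longrightarrow> a \<le> b \<Longrightarrow> 0 \<le> theta a b e t \<and> theta a b e t \<le> 1"
proof -
  assume e: "e > 0" and ab: "a \<le> b"
  have "(t - b) / e \<le> (t - a) / e" using e ab by (intro divide_right_mono) auto
  hence "HH ((t - b) / e) \<le> HH ((t - a) / e)" by (rule HH_mono)
  thus ?thesis using HH_bounds[of "(t - a) / e"] HH_bounds[of "(t - b) / e"] by (simp add: theta_def)
qed

lemma theta_mid: "e > 0 \<Longrightarrow> a + e \<le> t \<Longrightarrow> t \<le> b \<Longrightarrow> theta a b e t = 1"
proof -
  assume e: "e > 0" and t: "a + e \<le> t" "t \<le> b"
  have "(t - a) / e \<ge> 1" using e t by (simp add: field_simps)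
  moreover have "(t - b) / e \<le> 0" using e t by (simp add: divide_nonpos_pos)
  ultimately show ?thesis by (simp add: theta_def HH_one HH_zero)
qed

lemma bbc: "e \<noteq> 0 \<Longrightarrow> continuous_on S (\<lambda>t. bb ((t - a) / e))"
  by (rule continuous_on_compose2[OF bb_cont[of UNIV]]) (auto intro!: continuous_intros)

lemma w_integral:
  assumes e: "e > 0" and a: "0 \<le> a" "a + e \<le> L"
  shows "integral {0..L} (\<lambda>t. bb ((t - a) / e) / (e * FF 1)) = 1"
proof -
  have d: "((\<lambda>t. HH ((t - a) / e)) has_real_derivative bb ((t - a) / e) / (e * FF 1)) (at t)" for t
  proof -
    have "((\<lambda>t. HH ((t - a) / e)) has_real_derivative (bb ((t - a) / e) / FF 1) * (1 / e)) (at t)"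
      by (rule DERIV_chain2[OF HH_deriv]) (use e in \<open>auto intro!: derivative_eq_intros\<close>)
    thus ?thesis by (rule DERIV_cong) (simp add: mult.commute[of "FF 1"])
  qed
  have "((\<lambda>t. bb ((t - a) / e) / (e * FF 1)) has_integral (HH ((L - a) / e) - HH ((0 - a) / e))) {0..L}"
    by (rule fundamental_theorem_of_calculus)
       (use a e d in \<open>auto intro: has_field_derivative_at_within simp: has_real_derivative_iff_has_vector_derivative[symmetric]\<close>)
  moreover have "HH ((L - a) / e) = 1" using e a by (intro HH_one) (simp add: field_simps)
  moreover have "HH ((0 - a) / e) = 0" using e a by (intro HH_zero) (simp add: divide_nonpos_pos)
  ultimately have "((\<lambda>t. bb ((t - a) / e) / (e * FF 1)) has_integral 1) {0..L}" by simp
  thus ?thesis by (rule integral_unique)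
qed

lemma aint_cont_prod:
  fixes f g :: "real \<Rightarrow> real"
  assumes "f absolutely_integrable_on {c..d}" "continuous_on {c..d} g"
  shows "(\<lambda>x. f x * g x) absolutely_integrable_on {c..d}"
proof -
  have "g \<in> borel_measurable (lebesgue_on {c..d})"
    using assms(2) by (rule continuous_imp_measurable_on_sets_lebesgue) simp
  moreover have "bounded (g ` {c..d})"
    using assms(2) by (intro compact_imp_bounded compact_continuous_image) auto
  ultimately have "(\<lambda>x. g x * f x) absolutely_integrable_on {c..d}"
    using assms(1) by (intro absolutely_integrable_bounded_measurable_product_real) auto
  thus ?thesis by (simp add: mult.commute)
qed

lemma real_zero_le_4:
  fixes D :: real
  assumes "\<And>\<eta>. \<eta> > 0 \<Longrightarrow> \<bar>D\<bar> \<le> 4 * \<eta>"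
  shows "D = 0"
proof (rule ccontr)
  assume "D \<noteq> 0"
  hence "\<bar>D\<bar> / 8 > 0" by simp
  from assms[OF this] \<open>D \<noteq> 0\<close> show False by simp
qed

lemma dbr_interior:
  fixes z zp :: "real \<Rightarrow> real"
  assumes L: "L > 0" and zc: "continuous_on {0..L} z" and zp: "zp absolutely_integrable_on {0..L}"
    and HW: "\<And>\<theta>. test_fun 0 L \<theta> \<Longrightarrow>
       integral {0..L} (\<lambda>x. z x * deriv \<theta> x) = - integral {0..L} (\<lambda>x. zp x * \<theta> x)"
    and ab: "0 < a" "a \<le> b" "b < L"
  shows "z b - z a = integral {a..b} zp"
proof -
  define I where "I t = integral {0..t} (\<lambda>s. \<bar>zp s\<bar>)" for t
  have zpi: "zp integrable_on {0..L}" using zp by (rule set_lebesgue_integral_eq_integral(1))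
  have azpi: "(\<lambda>s. \<bar>zp s\<bar>) integrable_on {0..L}" using zp unfolding absolutely_integrable_on_def by simp
  have Ic: "continuous_on {0..L} I" unfolding I_def[abs_def] by (rule indefinite_integral_continuous_1[OF azpi])
  have Iuc: "uniformly_continuous_on {0..L} I" by (rule compact_uniformly_continuous[OF Ic]) simp
  have zuc: "uniformly_continuous_on {0..L} z" by (rule compact_uniformly_continuous[OF zc]) simp
  have key: "\<bar>z b - z a - integral {a..b} zp\<bar> \<le> 4 * \<eta>" if \<eta>: "\<eta> > 0" for \<eta>
  proof -
    obtain d1 where d1: "d1 > 0" "\<forall>x\<in>{0..L}. \<forall>x'\<in>{0..L}. dist x' x < d1 \<longrightarrow> dist (z x') (z x) < \<eta>"
      using zuc \<eta> unfolding uniformly_continuous_on_def by blast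
    obtain d2 where d2: "d2 > 0" "\<forall>x\<in>{0..L}. \<forall>x'\<in>{0..L}. dist x' x < d2 \<longrightarrow> dist (I x') (I x) < \<eta>"
      using Iuc \<eta> unfolding uniformly_continuous_on_def by blast
    define e where "e = min (min d1 d2) (L - b) / 2"
    have m: "min (min d1 d2) (L - b) \<le> L - b" "min (min d1 d2) (L - b) \<le> d1" "min (min d1 d2) (L - b) \<le> d2"
      "min (min d1 d2) (L - b) > 0" using d1 d2 ab by auto
    have e: "e > 0" "e < d1" "e < d2" "b + e < L" using m unfolding e_def by linarith+
    define \<theta> where "\<theta> = theta a b e"
    define w1 where "w1 t = bb ((t - a) / e) / (e * FF 1)" for t
    define w2 where "w2 t = bb ((t - b) / e) / (e * FF 1)" for t
    have thd: "deriv \<theta> = (\<lambda>t. w1 t - w2 t)"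
      using deriv_theta[OF e(1)] unfolding \<theta>_def w1_def w2_def thetad_def by simp
    have test: "test_fun 0 L \<theta>" unfolding \<theta>_def by (rule theta_test) (use e ab in auto)
    have w1c: "continuous_on {0..L} w1" unfolding w1_def[abs_def] 
      using e by (intro continuous_on_divide bbc continuous_on_const) (use FF1_pos in auto)
    have w2c: "continuous_on {0..L} w2" unfolding w2_def[abs_def] 
      using e by (intro continuous_on_divide bbc continuous_on_const) (use FF1_pos in auto)
    have thc: "continuous_on {0..L} \<theta>" unfolding \<theta>_def by (rule smooth_contin[OF theta_smooth])
    have zw1i: "(\<lambda>x. z x * w1 x) integrable_on {0..L}"
      by (intro integrable_continuous_interval continuous_on_mult zc w1c)
    have zw2i: "(\<lambda>x. z x * w2 x) integrable_on {0..L}"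
      by (intro integrable_continuous_interval continuous_on_mult zc w2c)
    have w1i: "integral {0..L} w1 = 1" unfolding w1_def by (rule w_integral) (use e ab in auto)
    have w2i: "integral {0..L} w2 = 1" unfolding w2_def by (rule w_integral) (use e ab in auto)
    have w1int: "w1 integrable_on {0..L}" by (rule integrable_continuous_interval[OF w1c])
    have w2int: "w2 integrable_on {0..L}" by (rule integrable_continuous_interval[OF w2c])
    have w1nn: "w1 t \<ge> 0" for t unfolding w1_def using e FF1_pos bb_nonneg by simp
    have w2nn: "w2 t \<ge> 0" for t unfolding w2_def using e FF1_pos bb_nonneg by simp
    have w1z: "a < t \<and> t < a + e" if "w1 t \<noteq> 0" for t
    proof -
      have "bb ((t - a) / e) \<noteq> 0" using that by (auto simp: w1_def)
      hence "\<not> ((t - a) / e \<le> 0 \<or> (t - a) / e \<ge> 1)" using bb_zero by blast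
      thus ?thesis using e by (auto simp: field_simps)
    qed
    have w2z: "b < t \<and> t < b + e" if "w2 t \<noteq> 0" for t
    proof -
      have "bb ((t - b) / e) \<noteq> 0" using that by (auto simp: w2_def)
      hence "\<not> ((t - b) / e \<le> 0 \<or> (t - b) / e \<ge> 1)" using bb_zero by blast
      thus ?thesis using e by (auto simp: field_simps)
    qed
    have C1: "\<bar>integral {0..L} (\<lambda>x. z x * w1 x) - z a\<bar> \<le> \<eta>"
    proof -
      have "integral {0..L} (\<lambda>x. (z x - z a) * w1 x) = integral {0..L} (\<lambda>x. z x * w1 x - z a * w1 x)"
        by (simp add: algebra_simps)
      also have "\<dots> = integral {0..L} (\<lambda>x. z x * w1 x) - integral {0..L} (\<lambda>x. z a * w1 x)"
        by (rule integral_diff[OF zw1i integrable_on_mult_right[OF w1int]])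
      also have "\<dots> = integral {0..L} (\<lambda>x. z x * w1 x) - z a * integral {0..L} w1"
        by (simp only: integral_mult_right)
      finally have eq1: "integral {0..L} (\<lambda>x. z x * w1 x) - z a = integral {0..L} (\<lambda>x. (z x - z a) * w1 x)"
        using w1i by simp
      have "norm (integral {0..L} (\<lambda>x. (z x - z a) * w1 x)) \<le> integral {0..L} (\<lambda>x. \<eta> * w1 x)"
      proof (rule integral_norm_bound_integral)
        show "(\<lambda>x. (z x - z a) * w1 x) integrable_on {0..L}"
          by (intro integrable_continuous_interval continuous_on_mult continuous_on_diff zc w1c continuous_on_const)
        show "(\<lambda>x. \<eta> * w1 x) integrable_on {0..L}" by (intro integrable_on_mult_right w1int)
        fix x assume x: "x \<in> {0..L}"
        show "norm ((z x - z a) * w1 x) \<le> \<eta> * w1 x"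
        proof (cases "w1 x = 0")
          case False
          hence "a < x \<and> x < a + e" by (rule w1z)
          hence "dist x a < d1" "a \<in> {0..L}" using e ab by (auto simp: dist_real_def)
          hence "\<bar>z x - z a\<bar> < \<eta>" using d1(2) x by (auto simp: dist_real_def)
          thus ?thesis using w1nn[of x] by (simp add: abs_mult mult_right_mono)
        qed simp
      qed
      also have "\<dots> = \<eta>" using w1i by simp
      finally show ?thesis using eq1 by simp
    qed
    have C2: "\<bar>integral {0..L} (\<lambda>x. z x * w2 x) - z b\<bar> \<le> \<eta>"
    proof -
      have "integral {0..L} (\<lambda>x. (z x - z b) * w2 x) = integral {0..L} (\<lambda>x. z x * w2 x - z b * w2 x)"
        by (simp add: algebra_simps)
      also have "\<dots> = integral {0..L} (\<lambda>x. z x * w2 x) - integral {0..L} (\<lambda>x. z b * w2 x)"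
        by (rule integral_diff[OF zw2i integrable_on_mult_right[OF w2int]])
      also have "\<dots> = integral {0..L} (\<lambda>x. z x * w2 x) - z b * integral {0..L} w2"
        by (simp only: integral_mult_right)
      finally have eq1: "integral {0..L} (\<lambda>x. z x * w2 x) - z b = integral {0..L} (\<lambda>x. (z x - z b) * w2 x)"
        using w2i by simp
      have "norm (integral {0..L} (\<lambda>x. (z x - z b) * w2 x)) \<le> integral {0..L} (\<lambda>x. \<eta> * w2 x)"
      proof (rule integral_norm_bound_integral)
        show "(\<lambda>x. (z x - z b) * w2 x) integrable_on {0..L}"
          by (intro integrable_continuous_interval continuous_on_mult continuous_on_diff zc w2c continuous_on_const)
        show "(\<lambda>x. \<eta> * w2 x) integrable_on {0..L}" by (intro integrable_on_mult_right w2int)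
        fix x assume x: "x \<in> {0..L}"
        show "norm ((z x - z b) * w2 x) \<le> \<eta> * w2 x"
        proof (cases "w2 x = 0")
          case False
          hence "b < x \<and> x < b + e" by (rule w2z)
          hence "dist x b < d1" "b \<in> {0..L}" using e ab by (auto simp: dist_real_def)
          hence "\<bar>z x - z b\<bar> < \<eta>" using d1(2) x by (auto simp: dist_real_def)
          thus ?thesis using w2nn[of x] by (simp add: abs_mult mult_right_mono)
        qed simp
      qed
      also have "\<dots> = \<eta>" using w2i by simp
      finally show ?thesis using eq1 by simp
    qed
    define R where "R x = (if x \<in> {a..b} then zp x else 0)" for x
    define J where "J x = (if x \<in> {a..a+e} then \<bar>zp x\<bar> else 0) + (if x \<in> {b..b+e} then \<bar>zp x\<bar> else 0)" for x
    have zpth: "(\<lambda>x. zp x * \<theta> x) integrable_on {0..L}"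
      using aint_cont_prod[OF zp thc] by (rule set_lebesgue_integral_eq_integral(1))
    have Ri: "R integrable_on {0..L}"
    proof -
      have sub: "{a..b} \<inter> {0..L} = {a..b}" using ab by auto
      show ?thesis unfolding R_def[abs_def] integrable_restrict_Int sub
        using ab by (intro integrable_subinterval_real[OF zpi]) auto
    qed
    have RI: "integral {0..L} R = integral {a..b} zp"
      unfolding R_def[abs_def] integral_restrict_Int using ab by (simp add: Int_absorb2)
    have J1: "(\<lambda>x. if x \<in> {a..a+e} then \<bar>zp x\<bar> else 0) integrable_on {0..L}"
         "integral {0..L} (\<lambda>x. if x \<in> {a..a+e} then \<bar>zp x\<bar> else 0) = I (a+e) - I a"
    proof -
      have sub: "{a..a+e} \<inter> {0..L} = {a..a+e}" using ab e by auto
      show "(\<lambda>x. if x \<in> {a..a+e} then \<bar>zp x\<bar> else 0) integrable_on {0..L}"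
        unfolding integrable_restrict_Int sub using ab e by (intro integrable_subinterval_real[OF azpi]) auto
      show "integral {0..L} (\<lambda>x. if x \<in> {a..a+e} then \<bar>zp x\<bar> else 0) = I (a+e) - I a"
        unfolding integral_restrict_Int sub I_def using ab e by (intro integral_sub0[OF azpi]) auto
    qed
    have J2: "(\<lambda>x. if x \<in> {b..b+e} then \<bar>zp x\<bar> else 0) integrable_on {0..L}"
         "integral {0..L} (\<lambda>x. if x \<in> {b..b+e} then \<bar>zp x\<bar> else 0) = I (b+e) - I b"
    proof -
      have sub: "{b..b+e} \<inter> {0..L} = {b..b+e}" using ab e by auto
      show "(\<lambda>x. if x \<in> {b..b+e} then \<bar>zp x\<bar> else 0) integrable_on {0..L}"
        unfolding integrable_restrict_Int sub using ab e by (intro integrable_subinterval_real[OF azpi]) auto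
      show "integral {0..L} (\<lambda>x. if x \<in> {b..b+e} then \<bar>zp x\<bar> else 0) = I (b+e) - I b"
        unfolding integral_restrict_Int sub I_def using ab e by (intro integral_sub0[OF azpi]) auto
    qed
    have Ji: "J integrable_on {0..L}" unfolding J_def[abs_def] by (intro integrable_add J1(1) J2(1))
    have JI: "integral {0..L} J = (I (a+e) - I a) + (I (b+e) - I b)"
      unfolding J_def[abs_def] J1(2)[symmetric] J2(2)[symmetric] by (rule integral_add[OF J1(1) J2(1)])
    have ptw: "norm (zp x * \<theta> x - R x) \<le> J x" if x: "x \<in> {0..L}" for x
    proof -
      have tr: "0 \<le> \<theta> x \<and> \<theta> x \<le> 1" unfolding \<theta>_def by (rule theta_range) (use e ab in auto)
      have b1: "\<bar>zp x * \<theta> x - R x\<bar> \<le> \<bar>zp x\<bar>"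
      proof (cases "x \<in> {a..b}")
        case True
        have "R x = zp x" using True unfolding R_def by simp
        hence "\<bar>zp x * \<theta> x - R x\<bar> = \<bar>zp x\<bar> * \<bar>\<theta> x - 1\<bar>" by (simp add: abs_mult[symmetric] algebra_simps)
        also have "\<dots> \<le> \<bar>zp x\<bar> * 1" using tr by (intro mult_left_mono) auto
        finally show ?thesis by simp
      next
        case False
        have "R x = 0" using False unfolding R_def by auto
        hence "\<bar>zp x * \<theta> x - R x\<bar> = \<bar>zp x\<bar> * \<bar>\<theta> x\<bar>" by (simp add: abs_mult)
        also have "\<dots> \<le> \<bar>zp x\<bar> * 1" using tr by (intro mult_left_mono) auto
        finally show ?thesis by simp
      qed
      show ?thesis
      proof (cases "x \<in> {a..a+e} \<or> x \<in> {b..b+e}")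
        case True
        hence "\<bar>zp x\<bar> \<le> J x" by (auto simp: J_def)
        thus ?thesis using b1 by simp
      next
        case False
        have J0: "J x = 0" using False unfolding J_def by auto
        have "zp x * \<theta> x - R x = 0"
        proof (cases "x < a")
          case True
          hence "\<theta> x = 0" unfolding \<theta>_def by (intro theta_supp) (use e ab in auto)
          thus ?thesis using True by (simp add: R_def)
        next
          case xa: False
          show ?thesis
          proof (cases "x > b + e")
            case True
            hence "\<theta> x = 0" unfolding \<theta>_def by (intro theta_supp) (use e ab in auto)
            thus ?thesis using True e by (simp add: R_def)
          next
            case False
            hence "a + e \<le> x" "x \<le> b" using xa \<open>\<not> (x \<in> {a..a+e} \<or> x \<in> {b..b+e})\<close> by auto
            hence "\<theta> x = 1" "x \<in> {a..b}" unfolding \<theta>_def using theta_mid e ab by auto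
            thus ?thesis by (simp add: R_def)
          qed
        qed
        thus ?thesis using J0 by simp
      qed
    qed
    have E: "\<bar>integral {0..L} (\<lambda>x. zp x * \<theta> x) - integral {a..b} zp\<bar> \<le> 2 * \<eta>"
    proof -
      have "integral {0..L} (\<lambda>x. zp x * \<theta> x) - integral {a..b} zp = integral {0..L} (\<lambda>x. zp x * \<theta> x - R x)"
        using zpth Ri RI by (simp add: integral_diff)
      also have "norm \<dots> \<le> integral {0..L} J"
        by (rule integral_norm_bound_integral) (use zpth Ri Ji ptw in \<open>auto intro: integrable_diff\<close>)
      also have "\<dots> < 2 * \<eta>"
      proof -
        have "\<bar>I (a+e) - I a\<bar> < \<eta>" using d2(2) e ab by (auto simp: dist_real_def)
        moreover have "\<bar>I (b+e) - I b\<bar> < \<eta>" using d2(2) e ab by (auto simp: dist_real_def)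
        ultimately show ?thesis using JI by simp
      qed
      finally show ?thesis by simp
    qed
    have eq: "integral {0..L} (\<lambda>x. z x * w1 x) - integral {0..L} (\<lambda>x. z x * w2 x) = - integral {0..L} (\<lambda>x. zp x * \<theta> x)"
    proof -
      have "integral {0..L} (\<lambda>x. z x * deriv \<theta> x) = integral {0..L} (\<lambda>x. z x * w1 x - z x * w2 x)"
        by (simp add: thd algebra_simps)
      also have "\<dots> = integral {0..L} (\<lambda>x. z x * w1 x) - integral {0..L} (\<lambda>x. z x * w2 x)"
        using zw1i zw2i by (rule integral_diff)
      finally show ?thesis using HW[OF test] by simp
    qed
    show ?thesis using C1 C2 E eq by linarith
  qed
  show ?thesis using real_zero_le_4[of "z b - z a - integral {a..b} zp"] key by simp
qed

lemma dbr:
  fixes z zp :: "real \<Rightarrow> real"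
  assumes L: "L > 0" and zc: "continuous_on {0..L} z" and zp: "zp absolutely_integrable_on {0..L}"
    and HW: "\<And>\<theta>. test_fun 0 L \<theta> \<Longrightarrow>
       integral {0..L} (\<lambda>x. z x * deriv \<theta> x) = - integral {0..L} (\<lambda>x. zp x * \<theta> x)"
    and xy: "0 \<le> x" "x \<le> y" "y \<le> L"
  shows "z y - z x = integral {x..y} zp"
proof -
  have zpi: "zp integrable_on {0..L}" using zp by (rule set_lebesgue_integral_eq_integral(1))
  define Z where "Z t = z t - integral {0..t} zp" for t
  have Zc: "continuous_on (closure {0<..<L}) Z"
    using L unfolding Z_def[abs_def] closure_greaterThanLessThan[OF L]
    by (intro continuous_on_diff zc indefinite_integral_continuous_1 zpi)
  have Zi: "Z t = Z (L/2)" if t: "t \<in> {0<..<L}" for t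
  proof (cases "t \<le> L/2")
    case True
    have "z (L/2) - z t = integral {t..L/2} zp"
      using t True L by (intro dbr_interior[OF L zc zp HW]) auto
    moreover have "integral {t..L/2} zp = integral {0..L/2} zp - integral {0..t} zp"
      using t True L by (intro integral_sub0[OF zpi]) auto
    ultimately show ?thesis unfolding Z_def by simp
  next
    case False
    have "z t - z (L/2) = integral {L/2..t} zp"
      using t False L by (intro dbr_interior[OF L zc zp HW]) auto
    moreover have "integral {L/2..t} zp = integral {0..t} zp - integral {0..L/2} zp"
      using t False L by (intro integral_sub0[OF zpi]) auto
    ultimately show ?thesis unfolding Z_def by simp
  qed
  have ZZ: "Z t = Z (L/2)" if "t \<in> {0..L}" for t
  proof -
    have "t \<in> closure {0<..<L}" using that closure_greaterThanLessThan[OF L] by simp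
    thus ?thesis by (intro continuous_constant_on_closure[OF Zc Zi])
  qed
  have "integral {x..y} zp = integral {0..y} zp - integral {0..x} zp"
    using xy by (intro integral_sub0[OF zpi]) auto
  moreover have "Z x = Z y" using ZZ[of x] ZZ[of y] xy by simp
  ultimately show ?thesis unfolding Z_def by simp
qed

lemma D_const:
  fixes D A :: "real \<Rightarrow> real"
  assumes ab: "a \<le> b"
    and Amono: "\<And>x y. a \<le> x \<Longrightarrow> x \<le> y \<Longrightarrow> y \<le> b \<Longrightarrow> A x \<le> A y"
    and H: "\<And>\<epsilon>. \<epsilon> > 0 \<Longrightarrow> \<exists>\<delta>>0. \<forall>x y. a \<le> x \<longrightarrow> x \<le> y \<longrightarrow> y \<le> b \<longrightarrow> y - x < \<delta> \<longrightarrow>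
                \<bar>D y - D x\<bar> \<le> \<epsilon> * (A y - A x)"
  shows "D b = D a"
proof -
  have bound: "\<bar>D b - D a\<bar> \<le> \<epsilon> * (A b - A a)" if \<epsilon>: "\<epsilon> > 0" for \<epsilon>
  proof -
    obtain \<delta> where \<delta>: "\<delta> > 0" "\<forall>x y. a \<le> x \<longrightarrow> x \<le> y \<longrightarrow> y \<le> b \<longrightarrow> y - x < \<delta> \<longrightarrow>
                \<bar>D y - D x\<bar> \<le> \<epsilon> * (A y - A x)" using H[OF \<epsilon>] by blast
    obtain N :: nat where N: "b - a < of_nat N * \<delta>" using ex_less_of_nat_mult[OF \<delta>(1)] by blast
    have N0: "N > 0" using N ab \<delta>(1) by (cases N) auto
    define t where "t i = a + real i * (b - a) / real N" for i
    have t0: "t 0 = a" and tN: "t N = b" using N0 by (auto simp: t_def)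
    have tmono: "a \<le> t i" "t i \<le> t (Suc i)" if "i < N" for i
    proof -
      have "0 \<le> real i * (b - a) / real N" using ab by simp
      moreover have "real i * (b - a) / real N \<le> real (Suc i) * (b - a) / real N"
        using ab N0 by (intro divide_right_mono mult_right_mono) auto
      ultimately show "a \<le> t i" "t i \<le> t (Suc i)" by (auto simp: t_def)
    qed
    have tle: "t (Suc i) \<le> b" if "i < N" for i
    proof -
      have "real (Suc i) * (b - a) \<le> real N * (b - a)" using that ab by (intro mult_right_mono) auto
      thus ?thesis using N0 by (simp add: t_def field_simps)
    qed
    have step: "t (Suc i) - t i < \<delta>" for i
    proof -
      have "t (Suc i) - t i = (real (Suc i) * (b - a) - real i * (b - a)) / real N"
        by (simp add: t_def diff_divide_distrib)
      also have "\<dots> = (b - a) / real N" by (simp add: algebra_simps)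
      finally have "t (Suc i) - t i = (b - a) / real N" .
      also have "\<dots> < \<delta>" using N N0 by (simp add: field_simps)
      finally show ?thesis .
    qed
    have "D b - D a = (\<Sum>i<N. D (t (Suc i)) - D (t i))"
      using sum_lessThan_telescope[of "\<lambda>i. D (t i)" N] t0 tN by simp
    hence "\<bar>D b - D a\<bar> \<le> (\<Sum>i<N. \<bar>D (t (Suc i)) - D (t i)\<bar>)" using sum_abs by simp
    also have "\<dots> \<le> (\<Sum>i<N. \<epsilon> * (A (t (Suc i)) - A (t i)))"
    proof (rule sum_mono)
      fix i assume "i \<in> {..<N}"
      hence i: "i < N" by simp
      show "\<bar>D (t (Suc i)) - D (t i)\<bar> \<le> \<epsilon> * (A (t (Suc i)) - A (t i))"
        using \<delta>(2) tmono[OF i] tle[OF i] step[of i] by blast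
    qed
    also have "\<dots> = \<epsilon> * (A b - A a)"
      using sum_lessThan_telescope[of "\<lambda>i. A (t i)" N] t0 tN by (simp add: sum_distrib_left[symmetric])
    finally show ?thesis .
  qed
  have C: "A b - A a \<ge> 0" using Amono[of a b] ab by simp
  show ?thesis
  proof (rule ccontr)
    assume ne: "D b \<noteq> D a"
    define \<epsilon> where "\<epsilon> = \<bar>D b - D a\<bar> / (2 * (A b - A a + 1))"
    have \<epsilon>: "\<epsilon> > 0" using ne C by (simp add: \<epsilon>_def)
    have "\<bar>D b - D a\<bar> \<le> \<epsilon> * (A b - A a)" by (rule bound[OF \<epsilon>])
    also have "\<dots> \<le> \<epsilon> * (A b - A a + 1)" using \<epsilon> by simp
    also have "\<dots> = \<bar>D b - D a\<bar> / 2"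
    proof -
      have "A b - A a + 1 > 0" using C by simp
      thus ?thesis unfolding \<epsilon>_def by (simp add: field_simps)
    qed
    finally show False using ne by simp
  qed
qed

lemma mvt_any:
  fixes F f :: "real \<Rightarrow> real"
  assumes "\<And>s. (F has_real_derivative f s) (at s)"
  shows "\<exists>\<xi>. min u v \<le> \<xi> \<and> \<xi> \<le> max u v \<and> F v - F u = f \<xi> * (v - u)"
proof (cases u v rule: linorder_cases)
  case less
  then obtain \<xi> where "u < \<xi>" "\<xi> < v" "F v - F u = (v - u) * f \<xi>" using MVT2[of u v F f] assms by blast
  thus ?thesis by (intro exI[of _ \<xi>]) auto
next
  case equal thus ?thesis by (intro exI[of _ u]) auto
next
  case greater
  then obtain \<xi> where "v < \<xi>" "\<xi> < u" "F u - F v = (u - v) * f \<xi>" using MVT2[of v u F f] assms by blast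
  thus ?thesis by (intro exI[of _ \<xi>]) (auto simp: algebra_simps)
qed

lemma chain_C1:
  fixes z zp F f :: "real \<Rightarrow> real"
  assumes zc: "continuous_on {0..L} z" and zp: "zp absolutely_integrable_on {0..L}"
    and FTCz: "\<And>x y. 0 \<le> x \<Longrightarrow> x \<le> y \<Longrightarrow> y \<le> L \<Longrightarrow> z y - z x = integral {x..y} zp"
    and Fd: "\<And>s. (F has_real_derivative f s) (at s)" and fc: "continuous_on UNIV f"
    and xy: "0 \<le> x" "x \<le> y" "y \<le> L"
  shows "F (z y) - F (z x) = integral {x..y} (\<lambda>t. f (z t) * zp t)"
proof -
  define g where "g t = f (z t) * zp t" for t
  have fzc: "continuous_on {0..L} (\<lambda>t. f (z t))"
    by (rule continuous_on_compose2[OF fc zc]) auto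
  have gabs: "g absolutely_integrable_on {0..L}"
    using aint_cont_prod[OF zp fzc] unfolding g_def by (simp add: mult.commute)
  have gi: "g integrable_on {0..L}" using gabs by (rule set_lebesgue_integral_eq_integral(1))
  have zpi: "zp integrable_on {0..L}" using zp by (rule set_lebesgue_integral_eq_integral(1))
  have azpi: "(\<lambda>s. \<bar>zp s\<bar>) integrable_on {0..L}" using zp unfolding absolutely_integrable_on_def by simp
  define D where "D t = F (z t) - integral {0..t} g" for t
  define A where "A t = integral {0..t} (\<lambda>s. \<bar>zp s\<bar>)" for t
  obtain M where M: "\<And>t. t \<in> {0..L} \<Longrightarrow> \<bar>z t\<bar> \<le> M"
  proof -
    have "bounded (z ` {0..L})" using zc by (intro compact_imp_bounded compact_continuous_image) auto
    then obtain M where "\<forall>u\<in>z ` {0..L}. norm u \<le> M" by (auto simp: bounded_iff)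
    hence "\<And>t. t \<in> {0..L} \<Longrightarrow> \<bar>z t\<bar> \<le> M" by auto
    thus ?thesis by (rule that)
  qed
  have fuc: "uniformly_continuous_on {-M..M} f"
    by (rule compact_uniformly_continuous) (auto intro: continuous_on_subset[OF fc])
  have zuc: "uniformly_continuous_on {0..L} z" by (rule compact_uniformly_continuous[OF zc]) simp
  have "D y = D x"
  proof (rule D_const[of x y A D])
    show "x \<le> y" by fact
    fix x' y' assume a: "x \<le> x'" "x' \<le> y'" "y' \<le> y"
    have "A y' - A x' = integral {x'..y'} (\<lambda>s. \<bar>zp s\<bar>)"
      unfolding A_def using a xy by (intro integral_sub0[OF azpi, symmetric]) auto
    also have "\<dots> \<ge> 0"
      by (rule Henstock_Kurzweil_Integration.integral_nonneg) 
         (use a xy in \<open>auto intro: integrable_subinterval_real[OF azpi]\<close>)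
    finally show "A x' \<le> A y'" by simp
  next
    fix \<epsilon> :: real assume \<epsilon>: "\<epsilon> > 0"
    obtain df where df: "df > 0" "\<forall>u\<in>{-M..M}. \<forall>v\<in>{-M..M}. dist v u < df \<longrightarrow> dist (f v) (f u) < \<epsilon>"
      using fuc \<epsilon> unfolding uniformly_continuous_on_def by blast
    obtain dz where dz: "dz > 0" "\<forall>t\<in>{0..L}. \<forall>t'\<in>{0..L}. dist t' t < dz \<longrightarrow> dist (z t') (z t) < df / 2"
      using zuc df(1) unfolding uniformly_continuous_on_def by (meson half_gt_zero)
    show "\<exists>\<delta>>0. \<forall>x' y'. x \<le> x' \<longrightarrow> x' \<le> y' \<longrightarrow> y' \<le> y \<longrightarrow> y' - x' < \<delta> \<longrightarrow>
                \<bar>D y' - D x'\<bar> \<le> \<epsilon> * (A y' - A x')"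
    proof (intro exI[of _ dz] conjI allI impI)
      show "dz > 0" by fact
      fix x' y' assume a: "x \<le> x'" "x' \<le> y'" "y' \<le> y" "y' - x' < dz"
      have x'L: "x' \<in> {0..L}" "y' \<in> {0..L}" using a xy by auto
      obtain \<xi> where \<xi>: "min (z x') (z y') \<le> \<xi>" "\<xi> \<le> max (z x') (z y')" "F (z y') - F (z x') = f \<xi> * (z y' - z x')"
        using mvt_any[OF Fd, of "z x'" "z y'"] by blast
      have \<xi>M: "\<xi> \<in> {-M..M}" using \<xi>(1,2) M[OF x'L(1)] M[OF x'L(2)] by auto
      have sub: "{x'..y'} \<subseteq> {0..L}" using a xy by auto
      have zpi': "zp integrable_on {x'..y'}" using sub by (intro integrable_subinterval_real[OF zpi]) auto
      have gi': "g integrable_on {x'..y'}" using sub by (intro integrable_subinterval_real[OF gi]) auto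
      have azpi': "(\<lambda>s. \<bar>zp s\<bar>) integrable_on {x'..y'}" using sub by (intro integrable_subinterval_real[OF azpi]) auto
      have "D y' - D x' = f \<xi> * integral {x'..y'} zp - (integral {0..y'} g - integral {0..x'} g)"
        unfolding D_def using \<xi>(3) FTCz[of x' y'] a xy by simp
      also have "\<dots> = integral {x'..y'} (\<lambda>t. f \<xi> * zp t) - integral {x'..y'} g"
        using a xy integral_sub0[OF gi, of x' y'] by (simp add: integral_mult_right)
      also have "\<dots> = integral {x'..y'} (\<lambda>t. f \<xi> * zp t - g t)"
        by (rule integral_diff[symmetric]) (auto intro: integrable_on_mult_right zpi' gi')
      finally have DD: "D y' - D x' = integral {x'..y'} (\<lambda>t. f \<xi> * zp t - g t)" .
      have "norm (integral {x'..y'} (\<lambda>t. f \<xi> * zp t - g t)) \<le> integral {x'..y'} (\<lambda>t. \<epsilon> * \<bar>zp t\<bar>)"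
      proof (rule integral_norm_bound_integral)
        show "(\<lambda>t. f \<xi> * zp t - g t) integrable_on {x'..y'}"
          by (intro integrable_diff integrable_on_mult_right zpi' gi')
        show "(\<lambda>t. \<epsilon> * \<bar>zp t\<bar>) integrable_on {x'..y'}" by (intro integrable_on_mult_right azpi')
        fix t assume t: "t \<in> {x'..y'}"
        have tL: "t \<in> {0..L}" using t sub by auto
        have "dist (z y') (z x') < df / 2" using dz(2) x'L a by (auto simp: dist_real_def)
        moreover have "dist (z t) (z x') < df / 2" using dz(2) x'L tL t a by (auto simp: dist_real_def)
        ultimately have h: "\<bar>z y' - z x'\<bar> * 2 < df" "\<bar>z t - z x'\<bar> * 2 < df" by (auto simp: dist_real_def)
        have "\<bar>\<xi> - z x'\<bar> \<le> \<bar>z y' - z x'\<bar>" using \<xi>(1,2) by (simp add: abs_le_iff min_def max_def split: if_splits)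
        hence "\<bar>\<xi> - z t\<bar> < df" using h abs_ge_self[of "z t - z x'"] abs_ge_minus_self[of "z t - z x'"]
          by (simp add: abs_le_iff abs_less_iff)
        moreover have "z t \<in> {-M..M}" using M[OF tL] by (simp add: abs_le_iff)
        ultimately have "\<bar>f \<xi> - f (z t)\<bar> < \<epsilon>" using df(2) \<xi>M unfolding dist_real_def by blast
        hence "\<bar>f \<xi> - f (z t)\<bar> * \<bar>zp t\<bar> \<le> \<epsilon> * \<bar>zp t\<bar>" by (intro mult_right_mono) auto
        thus "norm (f \<xi> * zp t - g t) \<le> \<epsilon> * \<bar>zp t\<bar>"
          by (simp add: g_def abs_mult[symmetric] left_diff_distrib)
      qed
      also have "\<dots> = \<epsilon> * (A y' - A x')"
        unfolding A_def using a xy integral_sub0[OF azpi, of x' y'] by (simp add: integral_mult_right)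
      finally show "\<bar>D y' - D x'\<bar> \<le> \<epsilon> * (A y' - A x')" using DD by simp
    qed
  qed
  thus ?thesis unfolding D_def g_def[symmetric] using integral_sub0[OF gi xy] by simp
qed

lemma ibp:
  fixes G g \<theta> \<theta>d :: "real \<Rightarrow> real"
  assumes L: "L \<ge> 0" and gabs: "g absolutely_integrable_on {0..L}"
    and Gftc: "\<And>x y. 0 \<le> x \<Longrightarrow> x \<le> y \<Longrightarrow> y \<le> L \<Longrightarrow> G y - G x = integral {x..y} g"
    and \<theta>d: "\<And>s. (\<theta> has_real_derivative \<theta>d s) (at s)" and \<theta>dc: "continuous_on {0..L} \<theta>d"
  shows "G L * \<theta> L - G 0 * \<theta> 0 = integral {0..L} (\<lambda>t. g t * \<theta> t + G t * \<theta>d t)"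
proof -
  have gi: "g integrable_on {0..L}" using gabs by (rule set_lebesgue_integral_eq_integral(1))
  have agi: "(\<lambda>s. \<bar>g s\<bar>) integrable_on {0..L}" using gabs unfolding absolutely_integrable_on_def by simp
  have Geq: "G t = G 0 + integral {0..t} g" if "t \<in> {0..L}" for t
    using Gftc[of 0 t] that by simp
  have Gc: "continuous_on {0..L} G"
  proof -
    have "continuous_on {0..L} (\<lambda>t. G 0 + integral {0..t} g)"
      by (intro continuous_on_add continuous_on_const indefinite_integral_continuous_1 gi)
    thus ?thesis using Geq continuous_on_eq by (metis (no_types, lifting))
  qed
  have \<theta>c: "continuous_on {0..L} \<theta>"
    using \<theta>d by (meson DERIV_continuous continuous_at_imp_continuous_on)
  define h where "h t = g t * \<theta> t + G t * \<theta>d t" for t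
  have hi: "h integrable_on {0..L}"
  proof -
    have "(\<lambda>t. g t * \<theta> t) absolutely_integrable_on {0..L}" by (rule aint_cont_prod[OF gabs \<theta>c])
    hence "(\<lambda>t. g t * \<theta> t) integrable_on {0..L}" by (rule set_lebesgue_integral_eq_integral(1))
    moreover have "(\<lambda>t. G t * \<theta>d t) integrable_on {0..L}"
      by (intro integrable_continuous_interval continuous_on_mult Gc \<theta>dc)
    ultimately show ?thesis unfolding h_def[abs_def] by (rule integrable_add)
  qed
  obtain M where M: "\<And>t. t \<in> {0..L} \<Longrightarrow> \<bar>\<theta>d t\<bar> \<le> M"
  proof -
    have "bounded (\<theta>d ` {0..L})" using \<theta>dc by (intro compact_imp_bounded compact_continuous_image) auto
    then obtain M where "\<forall>u\<in>\<theta>d ` {0..L}. norm u \<le> M" by (auto simp: bounded_iff)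
    hence "\<And>t. t \<in> {0..L} \<Longrightarrow> \<bar>\<theta>d t\<bar> \<le> M" by auto
    thus ?thesis by (rule that)
  qed
  have M0: "M \<ge> 0" using M[of 0] L by auto
  define K where "K t = G t * \<theta> t - integral {0..t} h" for t
  define A where "A t = M * t + integral {0..t} (\<lambda>s. \<bar>g s\<bar>)" for t
  have Guc: "uniformly_continuous_on {0..L} G" by (rule compact_uniformly_continuous[OF Gc]) simp
  have \<theta>uc: "uniformly_continuous_on {0..L} \<theta>" by (rule compact_uniformly_continuous[OF \<theta>c]) simp
  have "K L = K 0"
  proof (rule D_const[of 0 L A K])
    show "0 \<le> L" by fact
    fix x' y' assume a: "0 \<le> x'" "x' \<le> y'" "y' \<le> L"
    have "integral {0..y'} (\<lambda>s. \<bar>g s\<bar>) - integral {0..x'} (\<lambda>s. \<bar>g s\<bar>) = integral {x'..y'} (\<lambda>s. \<bar>g s\<bar>)"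
      using integral_sub0[OF agi a] by simp
    also have "\<dots> \<ge> 0"
      by (rule Henstock_Kurzweil_Integration.integral_nonneg) 
         (use a in \<open>auto intro: integrable_subinterval_real[OF agi]\<close>)
    finally show "A x' \<le> A y'" unfolding A_def using a M0 mult_left_mono[OF a(2) M0] by linarith
  next
    fix \<epsilon> :: real assume \<epsilon>: "\<epsilon> > 0"
    obtain d1 where d1: "d1 > 0" "\<forall>t\<in>{0..L}. \<forall>t'\<in>{0..L}. dist t' t < d1 \<longrightarrow> dist (G t') (G t) < \<epsilon>"
      using Guc \<epsilon> unfolding uniformly_continuous_on_def by blast
    obtain d2 where d2: "d2 > 0" "\<forall>t\<in>{0..L}. \<forall>t'\<in>{0..L}. dist t' t < d2 \<longrightarrow> dist (\<theta> t') (\<theta> t) < \<epsilon>"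
      using \<theta>uc \<epsilon> unfolding uniformly_continuous_on_def by blast
    show "\<exists>\<delta>>0. \<forall>x' y'. 0 \<le> x' \<longrightarrow> x' \<le> y' \<longrightarrow> y' \<le> L \<longrightarrow> y' - x' < \<delta> \<longrightarrow>
                \<bar>K y' - K x'\<bar> \<le> \<epsilon> * (A y' - A x')"
    proof (intro exI[of _ "min d1 d2"] conjI allI impI)
      show "min d1 d2 > 0" using d1 d2 by simp
      fix x' y' assume a: "0 \<le> x'" "x' \<le> y'" "y' \<le> L" "y' - x' < min d1 d2"
      have sub: "{x'..y'} \<subseteq> {0..L}" using a by auto
      have gi': "g integrable_on {x'..y'}" using sub by (intro integrable_subinterval_real[OF gi]) auto
      have agi': "(\<lambda>s. \<bar>g s\<bar>) integrable_on {x'..y'}" using sub by (intro integrable_subinterval_real[OF agi]) auto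
      have hi': "h integrable_on {x'..y'}" using sub by (intro integrable_subinterval_real[OF hi]) auto
      have \<theta>di': "\<theta>d integrable_on {x'..y'}" 
        using sub by (intro integrable_continuous_interval continuous_on_subset[OF \<theta>dc])
      have \<theta>ftc: "\<theta> y' - \<theta> x' = integral {x'..y'} \<theta>d"
      proof -
        have "(\<theta>d has_integral (\<theta> y' - \<theta> x')) {x'..y'}"
          by (rule fundamental_theorem_of_calculus) 
             (use a \<theta>d in \<open>auto intro: has_field_derivative_at_within simp: has_real_derivative_iff_has_vector_derivative[symmetric]\<close>)
        thus ?thesis by (simp add: integral_unique)
      qed
      define r where "r t = (G y' - G t) * \<theta>d t + (\<theta> x' - \<theta> t) * g t" for t
      have ri: "r integrable_on {x'..y'}"
      proof -
        have "(\<lambda>t. G y' * \<theta>d t + \<theta> x' * g t - h t) integrable_on {x'..y'}"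
          by (intro integrable_diff integrable_add integrable_on_mult_right gi' \<theta>di' hi')
        moreover have "(\<lambda>t. G y' * \<theta>d t + \<theta> x' * g t - h t) = r"
          by (auto simp: r_def h_def fun_eq_iff algebra_simps)
        ultimately show ?thesis by simp
      qed
      have "K y' - K x' = G y' * (\<theta> y' - \<theta> x') + \<theta> x' * (G y' - G x') - (integral {0..y'} h - integral {0..x'} h)"
        unfolding K_def by (simp add: algebra_simps)
      also have "\<dots> = integral {x'..y'} (\<lambda>t. G y' * \<theta>d t) + integral {x'..y'} (\<lambda>t. \<theta> x' * g t) - integral {x'..y'} h"
        using \<theta>ftc Gftc[OF a(1-3)] integral_sub0[OF hi a(1-3)] by (simp add: integral_mult_right)
      also have "\<dots> = integral {x'..y'} (\<lambda>t. G y' * \<theta>d t + \<theta> x' * g t - h t)"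
        by (simp add: integral_diff integral_add integrable_add integrable_on_mult_right gi' \<theta>di' hi')
      also have "\<dots> = integral {x'..y'} r"
        by (rule integral_cong) (simp add: r_def h_def algebra_simps)
      finally have KK: "K y' - K x' = integral {x'..y'} r" .
      have "norm (integral {x'..y'} r) \<le> integral {x'..y'} (\<lambda>t. \<epsilon> * M + \<epsilon> * \<bar>g t\<bar>)"
      proof (rule integral_norm_bound_integral)
        show "r integrable_on {x'..y'}" by fact
        show "(\<lambda>t. \<epsilon> * M + \<epsilon> * \<bar>g t\<bar>) integrable_on {x'..y'}"
          by (intro integrable_add integrable_on_mult_right agi' integrable_const_ivl)
        fix t assume t: "t \<in> {x'..y'}"
        have tL: "t \<in> {0..L}" using t sub by auto
        have "\<bar>G y' - G t\<bar> < \<epsilon>" using d1(2) tL a t by (auto simp: dist_real_def)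
        hence 1: "\<bar>(G y' - G t) * \<theta>d t\<bar> \<le> \<epsilon> * M"
          unfolding abs_mult using M[OF tL] by (intro mult_mono) auto
        have "\<bar>\<theta> x' - \<theta> t\<bar> < \<epsilon>" using d2(2) tL a t by (auto simp: dist_real_def)
        hence 2: "\<bar>(\<theta> x' - \<theta> t) * g t\<bar> \<le> \<epsilon> * \<bar>g t\<bar>"
          unfolding abs_mult by (intro mult_right_mono) auto
        show "norm (r t) \<le> \<epsilon> * M + \<epsilon> * \<bar>g t\<bar>"
          using 1 2 abs_triangle_ineq[of "(G y' - G t) * \<theta>d t" "(\<theta> x' - \<theta> t) * g t"]
          unfolding r_def real_norm_def by linarith
      qed
      also have "\<dots> = \<epsilon> * (M * (y' - x')) + \<epsilon> * integral {x'..y'} (\<lambda>t. \<bar>g t\<bar>)"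
      proof -
        have "integral {x'..y'} (\<lambda>t. \<epsilon> * M + \<epsilon> * \<bar>g t\<bar>) = integral {x'..y'} (\<lambda>t. \<epsilon> * M) + integral {x'..y'} (\<lambda>t. \<epsilon> * \<bar>g t\<bar>)"
          by (rule integral_add) (auto intro: integrable_on_mult_right agi' integrable_const_ivl)
        also have "integral {x'..y'} (\<lambda>t. \<epsilon> * M) = \<epsilon> * (M * (y' - x'))" using a by simp
        also have "integral {x'..y'} (\<lambda>t. \<epsilon> * \<bar>g t\<bar>) = \<epsilon> * integral {x'..y'} (\<lambda>t. \<bar>g t\<bar>)"
          by (rule integral_mult_right)
        finally show ?thesis .
      qed
      also have "\<dots> = \<epsilon> * (A y' - A x')"
        unfolding A_def using integral_sub0[OF agi a(1-3)] by (simp add: algebra_simps flip: distrib_left)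
      finally show "\<bar>K y' - K x'\<bar> \<le> \<epsilon> * (A y' - A x')" using KK by simp
    qed
  qed
  thus ?thesis unfolding K_def h_def by simp
qed

lemma set_int_lborel_abs:
  fixes f :: "real \<Rightarrow> real"
  assumes "set_integrable lborel S f"
  shows "f absolutely_integrable_on S"
proof -
  have m: "(\<lambda>x. indicator S x *\<^sub>R f x) \<in> borel_measurable lborel"
    using assms unfolding set_integrable_def by (rule borel_measurable_integrable)
  have "integrable (completion lborel) (\<lambda>x. indicator S x *\<^sub>R f x)"
    using assms unfolding set_integrable_def by (rule iffD2[OF integrable_completion[OF m]])
  thus ?thesis unfolding set_integrable_def .
qed

lemma bridge:
  fixes f :: "real \<Rightarrow> real"
  assumes "set_integrable lborel {0<..<L} f"
  shows "(LINT x:{0<..<L}|lborel. f x) = integral {0..L} f" "f absolutely_integrable_on {0..L}"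
proof -
  show "(LINT x:{0<..<L}|lborel. f x) = integral {0..L} f"
    using set_borel_integral_eq_integral(2)[OF assms] integral_open_interval_real[of 0 L f] by simp
  have "f absolutely_integrable_on box 0 L" using set_int_lborel_abs[OF assms] by simp
  thus "f absolutely_integrable_on {0..L}" using absolutely_integrable_on_open_interval[of 0 L f] by simp
qed

lemma set_int_cont_open:
  fixes f :: "real \<Rightarrow> real"
  assumes "continuous_on {0..L} f"
  shows "set_integrable lborel {0<..<L} f"
  by (rule set_integrable_subset[OF borel_integrable_atLeastAtMost'[OF assms]]) auto

lemma abs_prod_sq: "\<bar>a * b\<bar> \<le> a\<^sup>2 + b\<^sup>2" for a b :: real
proof -
  have "0 \<le> (\<bar>a\<bar> - \<bar>b\<bar>)\<^sup>2" by simp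
  also have "(\<bar>a\<bar> - \<bar>b\<bar>)\<^sup>2 = a\<^sup>2 + b\<^sup>2 - 2 * \<bar>a * b\<bar>"
    by (simp add: power2_eq_square algebra_simps abs_mult)
  finally have "2 * \<bar>a * b\<bar> \<le> a\<^sup>2 + b\<^sup>2" by simp
  moreover have "0 \<le> \<bar>a * b\<bar>" by simp
  ultimately show ?thesis by linarith
qed

lemma set_int_prod_L2:
  fixes f g :: "real \<Rightarrow> real"
  assumes f: "L2_on S f" and g: "L2_on S g" and S: "S \<in> sets lborel"
  shows "set_integrable lborel S (\<lambda>x. f x * g x)"
proof -
  have fi: "set_integrable lborel S (\<lambda>x. (f x)\<^sup>2)" and gi: "set_integrable lborel S (\<lambda>x. (g x)\<^sup>2)"
    using f g by (auto simp: L2_on_def)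
  have fm: "(\<lambda>x. indicator S x *\<^sub>R f x) \<in> borel_measurable lborel"
   and gm: "(\<lambda>x. indicator S x *\<^sub>R g x) \<in> borel_measurable lborel"
    using f g by (auto simp: L2_on_def set_borel_measurable_def)
  have "integrable lborel (\<lambda>x. indicator S x *\<^sub>R ((f x)\<^sup>2 + (g x)\<^sup>2))"
    using set_integral_add(1)[OF fi gi] unfolding set_integrable_def by simp
  thus ?thesis unfolding set_integrable_def
  proof (rule Bochner_Integration.integrable_bound)
    have "(\<lambda>x. (indicator S x *\<^sub>R f x) * (indicator S x *\<^sub>R g x)) \<in> borel_measurable lborel"
      using fm gm by (rule borel_measurable_times)
    moreover have "(\<lambda>x. (indicator S x *\<^sub>R f x) * (indicator S x *\<^sub>R g x)) = (\<lambda>x. indicator S x *\<^sub>R (f x * g x))"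
      by (auto simp: indicator_def fun_eq_iff)
    ultimately show "(\<lambda>x. indicator S x *\<^sub>R (f x * g x)) \<in> borel_measurable lborel" by simp
    show "AE x in lborel. norm (indicator S x *\<^sub>R (f x * g x)) \<le> norm (indicator S x *\<^sub>R ((f x)\<^sup>2 + (g x)\<^sup>2))"
    proof (intro AE_I2)
      fix x
      have "\<bar>f x * g x\<bar> \<le> (f x)\<^sup>2 + (g x)\<^sup>2"
        by (rule abs_prod_sq)
      thus "norm (indicator S x *\<^sub>R (f x * g x)) \<le> norm (indicator S x *\<^sub>R ((f x)\<^sup>2 + (g x)\<^sup>2))"
        by (auto simp: indicator_def)
    qed
  qed
qed

definition phin :: "(real \<Rightarrow> ereal) \<Rightarrow> nat \<Rightarrow> real \<Rightarrow> real" where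
  "phin \<phi> n t = real_of_ereal (min (\<phi> t) (ereal (real n)))"

lemma phi_fin:
  assumes "H_phi \<phi>" "s \<noteq> 0"
  shows "\<phi> s = ereal (real_of_ereal (\<phi> s))"
proof -
  have "\<phi> s \<noteq> \<infinity>" "\<phi> s \<noteq> -\<infinity>" using assms by (auto simp: H_phi_def)
  thus ?thesis by (cases "\<phi> s") auto
qed

lemma phin_cont:
  assumes "H_phi \<phi>"
  shows "continuous_on UNIV (phin \<phi> n)"
proof -
  have c: "continuous_on UNIV (\<lambda>t. min (\<phi> t) (ereal (real n)))"
    using assms by (intro continuous_on_min continuous_on_const) (auto simp: H_phi_def)
  show ?thesis unfolding continuous_on_def
  proof
    fix x :: real
    have t: "((\<lambda>t. min (\<phi> t) (ereal (real n))) \<longlongrightarrow> min (\<phi> x) (ereal (real n))) (at x within UNIV)"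
      using c unfolding continuous_on_def by blast
    have "min (\<phi> x) (ereal (real n)) \<le> ereal (real n)" by simp
    hence "min (\<phi> x) (ereal (real n)) \<noteq> \<infinity>"
    proof (intro notI)
      assume "min (\<phi> x) (ereal (real n)) \<le> ereal (real n)" "min (\<phi> x) (ereal (real n)) = \<infinity>"
      hence "\<infinity> \<le> ereal (real n)" by simp
      thus False by simp
    qed
    moreover have "min (\<phi> x) (ereal (real n)) \<noteq> -\<infinity>" using assms by (auto simp: H_phi_def min_def)
    ultimately have eq: "min (\<phi> x) (ereal (real n)) = ereal (phin \<phi> n x)"
      unfolding phin_def by (cases "min (\<phi> x) (ereal (real n))") auto
    have t2: "((\<lambda>t. min (\<phi> t) (ereal (real n))) \<longlongrightarrow> ereal (phin \<phi> n x)) (at x within UNIV)"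
      using t unfolding eq .
    show "(phin \<phi> n \<longlongrightarrow> phin \<phi> n x) (at x within UNIV)"
      using lim_real_of_ereal[OF t2] unfolding phin_def[abs_def] by simp
  qed
qed

lemma rphi_cont_at:
  assumes "H_phi \<phi>" "s \<noteq> 0"
  shows "isCont (\<lambda>t. real_of_ereal (\<phi> t)) s"
proof -
  have "isCont \<phi> s" using assms by (auto simp: H_phi_def continuous_on_eq_continuous_at)
  hence t: "(\<phi> \<longlongrightarrow> \<phi> s) (at s)" by (simp add: isCont_def)
  have t': "(\<phi> \<longlongrightarrow> ereal (real_of_ereal (\<phi> s))) (at s)"
    using t by (simp only: phi_fin[OF assms, symmetric])
  show ?thesis unfolding isCont_def using lim_real_of_ereal[OF t'] .
qed

lemma phin_conv:
  assumes "\<phi> s = ereal r"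
  shows "(\<lambda>n. phin \<phi> n s) \<longlonglongrightarrow> r"
proof (rule tendsto_eventually)
  obtain N :: nat where "r \<le> real N" using real_arch_simple by blast
  hence "\<forall>n\<ge>N. phin \<phi> n s = r" using assms by (auto simp: phin_def min_def)
  thus "\<forall>\<^sub>F n in sequentially. phin \<phi> n s = r" by (auto simp: eventually_sequentially)
qed

lemma phin_bound:
  assumes "\<phi> s = ereal r"
  shows "\<bar>phin \<phi> n s\<bar> \<le> \<bar>r\<bar>"
  using assms by (auto simp: phin_def min_def)

lemma rphi_int:
  assumes Hp: "H_phi \<phi>" and Hi: "H_int \<phi>"
  shows "s > 0 \<Longrightarrow> set_integrable lborel {0<..<s} (\<lambda>t. real_of_ereal (\<phi> t))"
    and "s < 0 \<Longrightarrow> set_integrable lborel {s<..<0} (\<lambda>t. real_of_ereal (\<phi> t))"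
proof -
  have A: "set_integrable lborel {0<..<1/2} (\<lambda>t. real_of_ereal (\<phi> t))"
       "set_integrable lborel {-(1/2)<..<0} (\<lambda>t. real_of_ereal (\<phi> t))"
    using Hi unfolding H_int_def by (auto dest: spec[of _ "1/2"])
  assume s: "s > 0"
  show "set_integrable lborel {0<..<s} (\<lambda>t. real_of_ereal (\<phi> t))"
  proof (cases "s \<le> 1/2")
    case True thus ?thesis by (intro set_integrable_subset[OF A(1)]) auto
  next
    case False
    have "continuous_on {1/2..s} (\<lambda>t. real_of_ereal (\<phi> t))"
      by (intro continuous_at_imp_continuous_on ballI rphi_cont_at[OF Hp]) auto
    hence B: "set_integrable lborel {1/2..s} (\<lambda>t. real_of_ereal (\<phi> t))" by (rule borel_integrable_atLeastAtMost')
    have "set_integrable lborel ({0<..<1/2} \<union> {1/2..s}) (\<lambda>t. real_of_ereal (\<phi> t))"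
      by (rule set_integrable_Un[OF A(1) B]) auto
    thus ?thesis by (rule set_integrable_subset) auto
  qed
next
  have A: "set_integrable lborel {0<..<1/2} (\<lambda>t. real_of_ereal (\<phi> t))"
       "set_integrable lborel {-(1/2)<..<0} (\<lambda>t. real_of_ereal (\<phi> t))"
    using Hi unfolding H_int_def by (auto dest: spec[of _ "1/2"])
  assume s: "s < 0"
  show "set_integrable lborel {s<..<0} (\<lambda>t. real_of_ereal (\<phi> t))"
  proof (cases "s \<ge> -(1/2)")
    case True thus ?thesis by (intro set_integrable_subset[OF A(2)]) auto
  next
    case False
    have "continuous_on {s..-(1/2)} (\<lambda>t. real_of_ereal (\<phi> t))"
      by (intro continuous_at_imp_continuous_on ballI rphi_cont_at[OF Hp]) auto
    hence B: "set_integrable lborel {s..-(1/2)} (\<lambda>t. real_of_ereal (\<phi> t))" by (rule borel_integrable_atLeastAtMost')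
    have "set_integrable lborel ({s..-(1/2)} \<union> {-(1/2)<..<0}) (\<lambda>t. real_of_ereal (\<phi> t))"
      by (rule set_integrable_Un[OF B A(2)]) auto
    thus ?thesis by (rule set_integrable_subset) auto
  qed
qed

lemma phin_dct:
  assumes Hp: "H_phi \<phi>" and I: "I \<in> sets lborel" "0 \<notin> I"
    and int: "set_integrable lborel I (\<lambda>t. real_of_ereal (\<phi> t))"
  shows "(\<lambda>n. LINT t:I|lborel. phin \<phi> n t) \<longlonglongrightarrow> (LINT t:I|lborel. real_of_ereal (\<phi> t))"
  unfolding set_lebesgue_integral_def
proof (rule integral_dominated_convergence[where w="\<lambda>x. indicator I x *\<^sub>R \<bar>real_of_ereal (\<phi> x)\<bar>"])
  show "(\<lambda>x. indicat_real I x *\<^sub>R real_of_ereal (\<phi> x)) \<in> borel_measurable lborel"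
    using int unfolding set_integrable_def by (rule borel_measurable_integrable)
  fix n
  have "phin \<phi> n \<in> borel_measurable borel" by (rule borel_measurable_continuous_onI[OF phin_cont[OF Hp]])
  hence pm: "phin \<phi> n \<in> borel_measurable lborel" by simp
  show "(\<lambda>x. indicat_real I x *\<^sub>R phin \<phi> n x) \<in> borel_measurable lborel"
    using I pm by (intro borel_measurable_scaleR borel_measurable_indicator) auto
  show "AE x in lborel. norm (indicat_real I x *\<^sub>R phin \<phi> n x) \<le> indicat_real I x *\<^sub>R \<bar>real_of_ereal (\<phi> x)\<bar>"
  proof (rule AE_I2)
    fix x
    show "norm (indicat_real I x *\<^sub>R phin \<phi> n x) \<le> indicat_real I x *\<^sub>R \<bar>real_of_ereal (\<phi> x)\<bar>"
    proof (cases "x \<in> I")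
      case True
      hence "x \<noteq> 0" using I by auto
      thus ?thesis using True phin_bound[OF phi_fin[OF Hp]] by simp
    qed simp
  qed
next
  show "integrable lborel (\<lambda>x. indicat_real I x *\<^sub>R \<bar>real_of_ereal (\<phi> x)\<bar>)"
    using set_integrable_abs[OF int] unfolding set_integrable_def .
  show "AE x in lborel. (\<lambda>n. indicat_real I x *\<^sub>R phin \<phi> n x) \<longlonglongrightarrow> indicat_real I x *\<^sub>R real_of_ereal (\<phi> x)"
  proof (rule AE_I2)
    fix x
    show "(\<lambda>n. indicat_real I x *\<^sub>R phin \<phi> n x) \<longlonglongrightarrow> indicat_real I x *\<^sub>R real_of_ereal (\<phi> x)"
    proof (cases "x \<in> I")
      case True
      hence "x \<noteq> 0" using I by auto
      thus ?thesis using True phin_conv[OF phi_fin[OF Hp]] by simp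
    qed simp
  qed
qed

definition psin :: "(real \<Rightarrow> ereal) \<Rightarrow> nat \<Rightarrow> real \<Rightarrow> real" where
  "psin \<phi> n s = interval_lebesgue_integral lborel (ereal 0) (ereal s) (phin \<phi> n)"

lemma psin_lim:
  assumes Hp: "H_phi \<phi>" and Hi: "H_int \<phi>"
  shows "(\<lambda>n. psin \<phi> n s) \<longlonglongrightarrow> psi \<phi> s"
proof (cases s "0::real" rule: linorder_cases)
  case greater
  have "(\<lambda>n. LINT t:{0<..<s}|lborel. phin \<phi> n t) \<longlonglongrightarrow> (LINT t:{0<..<s}|lborel. real_of_ereal (\<phi> t))"
    using greater by (intro phin_dct[OF Hp] rphi_int(1)[OF Hp Hi]) auto
  thus ?thesis using greater
    by (simp add: psin_def psi_def interval_lebesgue_integral_le_eq)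
next
  case less
  have "(\<lambda>n. LINT t:{s<..<0}|lborel. phin \<phi> n t) \<longlonglongrightarrow> (LINT t:{s<..<0}|lborel. real_of_ereal (\<phi> t))"
    using less by (intro phin_dct[OF Hp] rphi_int(2)[OF Hp Hi]) auto
  hence "(\<lambda>n. - (LINT t:{s<..<0}|lborel. phin \<phi> n t)) \<longlonglongrightarrow> - (LINT t:{s<..<0}|lborel. real_of_ereal (\<phi> t))"
    by (rule tendsto_minus)
  thus ?thesis using less
    by (simp add: psin_def psi_def interval_lebesgue_integral_gt_eq)
next
  case equal thus ?thesis by (simp add: psin_def psi_def)
qed

lemma psin_deriv:
  assumes Hp: "H_phi \<phi>"
  shows "(psin \<phi> n has_real_derivative phin \<phi> n s) (at s)"
proof -
  define R where "R = \<bar>s\<bar> + 1"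
  have "((\<lambda>u. interval_lebesgue_integral lborel (ereal 0) (ereal u) (phin \<phi> n)) has_vector_derivative phin \<phi> n s)
          (at s within {-R..R})"
    by (rule interval_integral_FTC2) (auto simp: R_def intro: continuous_on_subset[OF phin_cont[OF Hp]])
  moreover have "at s within {-R..R} = at s" by (intro at_within_interior) (auto simp: R_def)
  ultimately show ?thesis
    by (simp add: psin_def[abs_def] has_real_derivative_iff_has_vector_derivative)
qed

lemma set_int_mult_bdd:
  fixes f h :: "real \<Rightarrow> real"
  assumes f: "set_integrable lborel S f" and hm: "h \<in> borel_measurable lborel"
    and B: "\<And>x. x \<in> S \<Longrightarrow> \<bar>h x\<bar> \<le> B"
  shows "set_integrable lborel S (\<lambda>x. f x * h x)"
proof -
  have "integrable lborel (\<lambda>x. B * (indicator S x *\<^sub>R \<bar>f x\<bar>))"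
    using set_integrable_abs[OF f] unfolding set_integrable_def by (rule integrable_mult_right)
  thus ?thesis unfolding set_integrable_def
  proof (rule Bochner_Integration.integrable_bound)
    have fm: "(\<lambda>x. indicator S x *\<^sub>R f x) \<in> borel_measurable lborel"
      using f unfolding set_integrable_def by (rule borel_measurable_integrable)
    have "(\<lambda>x. (indicator S x *\<^sub>R f x) * h x) \<in> borel_measurable lborel"
      using fm hm by (rule borel_measurable_times)
    thus "(\<lambda>x. indicator S x *\<^sub>R (f x * h x)) \<in> borel_measurable lborel" by (simp add: mult.assoc)
    show "AE x in lborel. norm (indicator S x *\<^sub>R (f x * h x)) \<le> norm (B * (indicator S x *\<^sub>R \<bar>f x\<bar>))"
    proof (rule AE_I2)
      fix x
      show "norm (indicator S x *\<^sub>R (f x * h x)) \<le> norm (B * (indicator S x *\<^sub>R \<bar>f x\<bar>))"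
      proof (cases "x \<in> S")
        case True
        have "\<bar>f x * h x\<bar> \<le> \<bar>f x\<bar> * B" unfolding abs_mult using B[OF True] by (intro mult_left_mono) auto
        also have "\<dots> \<le> \<bar>B * \<bar>f x\<bar>\<bar>" by (simp add: abs_mult mult.commute mult_right_mono)
        finally show ?thesis using True by simp
      qed simp
    qed
  qed
qed

lemma rhs_lim:
  fixes z zp :: "real \<Rightarrow> real"
  assumes Hp: "H_phi \<phi>" and zc: "continuous_on {0..L} z" and zp: "zp absolutely_integrable_on {0..L}"
    and gabs: "(\<lambda>t. real_of_ereal (\<phi> (z t)) * zp t) absolutely_integrable_on {0..L}"
    and ae: "AE x in lborel. x \<in> {0<..<L} \<longrightarrow> \<phi> (z x) < \<infinity>"
    and xy: "0 \<le> x" "x \<le> y" "y \<le> L"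
  shows "(\<lambda>n. integral {x..y} (\<lambda>t. phin \<phi> n (z t) * zp t)) \<longlonglongrightarrow> integral {x..y} (\<lambda>t. real_of_ereal (\<phi> (z t)) * zp t)"
proof -
  define g where "g t = real_of_ereal (\<phi> (z t)) * zp t" for t
  from ae obtain N0 where N0': "{t. \<not> (t \<in> {0<..<L} \<longrightarrow> \<phi> (z t) < \<infinity>)} \<subseteq> N0"
    "emeasure lborel N0 = 0" "N0 \<in> sets lborel" by (rule AE_E) auto
  have N0: "N0 \<in> null_sets lborel" "{t. \<not> (t \<in> {0<..<L} \<longrightarrow> \<phi> (z t) < \<infinity>)} \<subseteq> N0"
    using N0' by (auto simp: null_sets_def)
  define N where "N = N0 \<union> {0, L}"
  have negN: "negligible N"
  proof -
    have "negligible N0" using null_sets_completionI[OF N0(1)] by (simp add: negligible_iff_null_sets)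
    moreover have "negligible {0, L}" by simp
    ultimately show ?thesis unfolding N_def by (rule negligible_Un)
  qed
  have good: "\<phi> (z t) = ereal (real_of_ereal (\<phi> (z t)))" if "t \<in> {x..y}" "t \<notin> N" for t
  proof -
    have "t \<in> {0<..<L}" using that xy by (auto simp: N_def)
    hence "\<phi> (z t) < \<infinity>" using N0(2) that by (auto simp: N_def)
    moreover have "\<phi> (z t) \<noteq> -\<infinity>" using Hp by (auto simp: H_phi_def)
    ultimately show ?thesis by (cases "\<phi> (z t)") auto
  qed
  define fn where "fn n t = (if t \<in> N then 0 else phin \<phi> n (z t) * zp t)" for n t
  define g' where "g' t = (if t \<in> N then 0 else g t)" for t
  have sub: "{x..y} \<subseteq> {0..L}" using xy by auto
  have fi0: "(\<lambda>t. phin \<phi> n (z t) * zp t) integrable_on {x..y}" for n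
  proof -
    have "continuous_on {0..L} (\<lambda>t. phin \<phi> n (z t))"
      by (rule continuous_on_compose2[OF phin_cont[OF Hp] zc]) auto
    from aint_cont_prod[OF zp this] have "(\<lambda>t. zp t * phin \<phi> n (z t)) absolutely_integrable_on {0..L}" .
    hence "(\<lambda>t. zp t * phin \<phi> n (z t)) integrable_on {0..L}" by (rule set_lebesgue_integral_eq_integral(1))
    hence "(\<lambda>t. zp t * phin \<phi> n (z t)) integrable_on {x..y}" using sub by (rule integrable_subinterval_real)
    thus ?thesis by (simp add: mult.commute)
  qed
  have gi: "g integrable_on {x..y}"
    using integrable_subinterval_real[OF set_lebesgue_integral_eq_integral(1)[OF gabs] sub] by (simp add: g_def[abs_def])
  have agi: "(\<lambda>t. \<bar>g t\<bar>) integrable_on {x..y}"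
    using integrable_subinterval_real[OF _ sub] gabs unfolding absolutely_integrable_on_def g_def[abs_def] by auto
  have e1: "integral {x..y} (\<lambda>t. phin \<phi> n (z t) * zp t) = integral {x..y} (fn n)" for n
    by (rule integral_spike[OF negN]) (auto simp: fn_def)
  have e2: "integral {x..y} g = integral {x..y} g'"
    by (rule integral_spike[OF negN]) (auto simp: g'_def)
  have "(\<lambda>n. integral {x..y} (fn n)) \<longlonglongrightarrow> integral {x..y} g'"
  proof (rule dominated_convergence(2))
    fix n show "fn n integrable_on {x..y}"
      by (rule integrable_spike[OF fi0 negN]) (auto simp: fn_def)
  next
    show "(\<lambda>t. \<bar>g t\<bar>) integrable_on {x..y}" by fact
  next
    fix n t assume t: "t \<in> {x..y}"
    show "norm (fn n t) \<le> \<bar>g t\<bar>"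
    proof (cases "t \<in> N")
      case False
      have "\<bar>phin \<phi> n (z t) * zp t\<bar> \<le> \<bar>real_of_ereal (\<phi> (z t))\<bar> * \<bar>zp t\<bar>"
        unfolding abs_mult by (intro mult_right_mono phin_bound[of \<phi> "z t" "real_of_ereal (\<phi> (z t))", OF good[OF t False]]) auto
      thus ?thesis using False by (simp add: fn_def g_def abs_mult)
    qed (simp add: fn_def)
  next
    fix t assume t: "t \<in> {x..y}"
    show "(\<lambda>n. fn n t) \<longlonglongrightarrow> g' t"
    proof (cases "t \<in> N")
      case False
      have "(\<lambda>n. phin \<phi> n (z t)) \<longlonglongrightarrow> real_of_ereal (\<phi> (z t))"
        by (rule phin_conv[of \<phi> "z t" "real_of_ereal (\<phi> (z t))", OF good[OF t False]])
      hence "(\<lambda>n. phin \<phi> n (z t) * zp t) \<longlonglongrightarrow> real_of_ereal (\<phi> (z t)) * zp t"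
        by (rule tendsto_mult_right)
      thus ?thesis using False by (simp add: fn_def g'_def g_def)
    qed (simp add: fn_def g'_def)
  qed
  thus ?thesis using e1 e2 by (simp add: g_def[abs_def])
qed

theorem mainTheorem14:
  fixes L :: real and \<phi> :: "real \<Rightarrow> ereal" and z z' :: "real \<Rightarrow> real"
  assumes "L > 0"
    and "H_phi \<phi>" and "H_int \<phi>" and "H_bdd \<phi>"
    and "continuous_on {0..L} z"
    and "L2_on {0<..<L} z" and "L2_on {0<..<L} z'" and "weak_deriv_on 0 L z z'"
    and "AE x in lborel. x \<in> {0<..<L} \<longrightarrow> \<phi> (z x) < \<infinity>"
    and "L2_on {0<..<L} (\<lambda>x. real_of_ereal (\<phi> (z x)))"
  shows "W11_on 0 L (\<lambda>x. psi \<phi> (z x))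
    \<and> weak_deriv_on 0 L (\<lambda>x. psi \<phi> (z x)) (\<lambda>x. real_of_ereal (\<phi> (z x)) * z' x)
    \<and> (LINT x:{0<..<L}|lborel. real_of_ereal (\<phi> (z x)) * z' x) = psi \<phi> (z L) - psi \<phi> (z 0)"
proof -
  have L: "L > 0" and Hp: "H_phi \<phi>" and Hi: "H_int \<phi>" and zc: "continuous_on {0..L} z"
    and zpL2: "L2_on {0<..<L} z'" and wd: "weak_deriv_on 0 L z z'"
    and ae: "AE x in lborel. x \<in> {0<..<L} \<longrightarrow> \<phi> (z x) < \<infinity>"
    and phL2: "L2_on {0<..<L} (\<lambda>x. real_of_ereal (\<phi> (z x)))" using assms by auto
  define g where "g x = real_of_ereal (\<phi> (z x)) * z' x" for x
  define G where "G x = psi \<phi> (z x)" for x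
  have S: "{0<..<L} \<in> sets lborel" by simp
  have gL1: "set_integrable lborel {0<..<L} g"
    unfolding g_def[abs_def] by (rule set_int_prod_L2[OF phL2 zpL2 S])
  have oneL2: "L2_on {0<..<L} (\<lambda>_. 1)"
    unfolding L2_on_def set_borel_measurable_def
    by (auto intro: set_int_cont_open continuous_on_const)
  have zpL1: "set_integrable lborel {0<..<L} z'" using set_int_prod_L2[OF oneL2 zpL2 S] by simp
  have gabs: "g absolutely_integrable_on {0..L}" and gint: "(LINT x:{0<..<L}|lborel. g x) = integral {0..L} g"
    using bridge[OF gL1] by auto
  have zpabs: "z' absolutely_integrable_on {0..L}" using bridge[OF zpL1] by auto
  have HW: "integral {0..L} (\<lambda>x. z x * deriv \<theta> x) = - integral {0..L} (\<lambda>x. z' x * \<theta> x)"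
    if t: "test_fun 0 L \<theta>" for \<theta>
  proof -
    have sm: "smooth_fun \<theta>" using t by (simp add: test_fun_def)
    have dc: "continuous_on {0..L} (deriv \<theta>)" by (rule smooth_contin[OF smooth_deriv[OF sm]])
    have thc: "continuous_on UNIV \<theta>" by (rule smooth_contin[OF sm])
    have i1: "set_integrable lborel {0<..<L} (\<lambda>x. z x * deriv \<theta> x)"
      by (intro set_int_cont_open continuous_on_mult zc dc)
    obtain B where B: "\<And>x. x \<in> {0..L} \<Longrightarrow> \<bar>\<theta> x\<bar> \<le> B"
    proof -
      have "bounded (\<theta> ` {0..L})" 
        by (intro compact_imp_bounded compact_continuous_image continuous_on_subset[OF thc]) auto
      then obtain B where "\<forall>u\<in>\<theta> ` {0..L}. norm u \<le> B" by (auto simp: bounded_iff)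
      hence "\<And>x. x \<in> {0..L} \<Longrightarrow> \<bar>\<theta> x\<bar> \<le> B" by auto
      thus ?thesis by (rule that)
    qed
    have "\<theta> \<in> borel_measurable borel" by (rule borel_measurable_continuous_onI[OF thc])
    hence thmeas: "\<theta> \<in> borel_measurable lborel" by simp
    have i2: "set_integrable lborel {0<..<L} (\<lambda>x. z' x * \<theta> x)"
      by (rule set_int_mult_bdd[OF zpL1 thmeas, of B]) (use B in auto)
    have "(LINT x:{0<..<L}|lborel. z x * deriv \<theta> x) = - (LINT x:{0<..<L}|lborel. z' x * \<theta> x)"
      using wd t by (auto simp: weak_deriv_on_def)
    thus ?thesis using bridge(1)[OF i1] bridge(1)[OF i2] by simp
  qed
  have FTCz: "z y - z x = integral {x..y} z'" if "0 \<le> x" "x \<le> y" "y \<le> L" for x y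
    by (rule dbr[OF L zc zpabs HW that])
  have gabs': "(\<lambda>t. real_of_ereal (\<phi> (z t)) * z' t) absolutely_integrable_on {0..L}"
    using gabs by (simp add: g_def[abs_def])
  have Gftc: "G y - G x = integral {x..y} g" if xy: "0 \<le> x" "x \<le> y" "y \<le> L" for x y
  proof -
    have e: "psin \<phi> n (z y) - psin \<phi> n (z x) = integral {x..y} (\<lambda>t. phin \<phi> n (z t) * z' t)" for n
      by (rule chain_C1[OF zc zpabs FTCz psin_deriv[OF Hp] phin_cont[OF Hp] xy])
    have l1: "(\<lambda>n. psin \<phi> n (z y) - psin \<phi> n (z x)) \<longlonglongrightarrow> G y - G x"
      unfolding G_def by (intro tendsto_diff psin_lim[OF Hp Hi])
    have l2: "(\<lambda>n. integral {x..y} (\<lambda>t. phin \<phi> n (z t) * z' t)) \<longlonglongrightarrow> integral {x..y} g"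
      using rhs_lim[OF Hp zc zpabs gabs' ae xy] by (simp add: g_def[abs_def])
    show ?thesis using LIMSEQ_unique[OF l1] l2 e by simp
  qed
  have gi: "g integrable_on {0..L}" using gabs by (rule set_lebesgue_integral_eq_integral(1))
  have Gc: "continuous_on {0..L} G"
  proof -
    have "continuous_on {0..L} (\<lambda>t. G 0 + integral {0..t} g)"
      by (intro continuous_on_add continuous_on_const indefinite_integral_continuous_1 gi)
    moreover have "\<And>t. t \<in> {0..L} \<Longrightarrow> G 0 + integral {0..t} g = G t" using Gftc by force
    ultimately show ?thesis using continuous_on_eq by blast
  qed
  have GL1: "set_integrable lborel {0<..<L} G" by (rule set_int_cont_open[OF Gc])
  have WD: "weak_deriv_on 0 L G g"
    unfolding weak_deriv_on_def
  proof (intro conjI allI impI)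
    fix c d :: real assume cd: "0 < c \<and> d < L"
    show "set_integrable lborel {c..d} G"
    proof (cases "c \<le> d")
      case True thus ?thesis using cd by (intro set_integrable_subset[OF GL1]) auto
    qed (simp add: set_integrable_def)
    show "set_integrable lborel {c..d} g"
    proof (cases "c \<le> d")
      case True thus ?thesis using cd by (intro set_integrable_subset[OF gL1]) auto
    qed (simp add: set_integrable_def)
  next
    fix \<theta> assume t: "test_fun 0 L \<theta>"
    obtain c d where cd: "0 < c" "c \<le> d" "d < L" "\<And>x. x \<notin> {c..d} \<Longrightarrow> \<theta> x = 0"
      using t unfolding test_fun_def by blast
    have sm: "smooth_fun \<theta>" using t by (simp add: test_fun_def)
    have dc: "continuous_on {0..L} (deriv \<theta>)" by (rule smooth_contin[OF smooth_deriv[OF sm]])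
    have thc: "continuous_on UNIV \<theta>" by (rule smooth_contin[OF sm])
    have thd: "(\<theta> has_real_derivative deriv \<theta> s) (at s)" for s
      using smooth_diff[OF sm] DERIV_deriv_iff_real_differentiable by blast
    have ib: "G L * \<theta> L - G 0 * \<theta> 0 = integral {0..L} (\<lambda>t. g t * \<theta> t + G t * deriv \<theta> t)"
      by (rule ibp[OF _ gabs Gftc thd dc]) (use L in auto)
    have th0: "\<theta> 0 = 0" "\<theta> L = 0" using cd by auto
    have gti: "(\<lambda>t. g t * \<theta> t) integrable_on {0..L}"
      using aint_cont_prod[OF gabs continuous_on_subset[OF thc]] by (auto intro: set_lebesgue_integral_eq_integral(1))
    have Gti: "(\<lambda>t. G t * deriv \<theta> t) integrable_on {0..L}"
      by (intro integrable_continuous_interval continuous_on_mult Gc dc)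
    have "integral {0..L} (\<lambda>t. g t * \<theta> t) + integral {0..L} (\<lambda>t. G t * deriv \<theta> t) = 0"
      using ib th0 integral_add[OF gti Gti] by simp
    hence eq: "integral {0..L} (\<lambda>t. G t * deriv \<theta> t) = - integral {0..L} (\<lambda>t. g t * \<theta> t)" by simp
    have i1: "set_integrable lborel {0<..<L} (\<lambda>x. G x * deriv \<theta> x)"
      by (intro set_int_cont_open continuous_on_mult Gc dc)
    obtain B where B: "\<And>x. x \<in> {0..L} \<Longrightarrow> \<bar>\<theta> x\<bar> \<le> B"
    proof -
      have "bounded (\<theta> ` {0..L})" 
        by (intro compact_imp_bounded compact_continuous_image continuous_on_subset[OF thc]) auto
      then obtain B where "\<forall>u\<in>\<theta> ` {0..L}. norm u \<le> B" by (auto simp: bounded_iff)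
      hence "\<And>x. x \<in> {0..L} \<Longrightarrow> \<bar>\<theta> x\<bar> \<le> B" by auto
      thus ?thesis by (rule that)
    qed
    have "\<theta> \<in> borel_measurable borel" by (rule borel_measurable_continuous_onI[OF thc])
    hence thmeas: "\<theta> \<in> borel_measurable lborel" by simp
    have i2: "set_integrable lborel {0<..<L} (\<lambda>x. g x * \<theta> x)"
      by (rule set_int_mult_bdd[OF gL1 thmeas, of B]) (use B in auto)
    show "(LINT x:{0<..<L}|lborel. G x * deriv \<theta> x) = - (LINT x:{0<..<L}|lborel. g x * \<theta> x)"
      using bridge(1)[OF i1] bridge(1)[OF i2] eq by simp
  qed
  have W11: "W11_on 0 L G" unfolding W11_on_def L1_on_def using GL1 gL1 WD by blast
  have third: "(LINT x:{0<..<L}|lborel. g x) = G L - G 0" using gint Gftc[of 0 L] L by simp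
  have Geq: "G = (\<lambda>x. psi \<phi> (z x))" by (simp add: G_def[abs_def])
  have geq: "g = (\<lambda>x. real_of_ereal (\<phi> (z x)) * z' x)" by (simp add: g_def[abs_def])
  show ?thesis using W11 WD third unfolding Geq geq G_def by simp
qed

end
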